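(* Let $\beta\in(0,1)$, $\alpha>0$, $\varepsilon>0$, $\rho\ge 0$, $\kappa\in[0,1)$, and consider the system $$x'=y,\qquad y'=\rho z^2\cos x+(z^2+\kappa)\sin x\cos x-\sin x-\varepsilon y,\qquad z'=\alpha(\cos x-\beta)$$ on $(0,\pi/2)\times\mathbb R\times[0,\infty)$, with equilibrium point $$P_0=\Big(\arccos\beta,\;0,\;\frac{(1-\kappa\beta)^{1/2}(1-\beta^2)^{1/4}}{\beta^{1/2}\big(\rho+(1-\beta^2)^{1/2}\big)^{1/2}}\Big).$$ Define $$\varepsilon_c=\frac{2\alpha\beta^{3/2}(1-\beta^2)^{3/4}(1-\kappa\beta)^{1/2}\big(\rho+(1-\beta^2)^{1/2}\big)^{3/2}}{(1-\beta^2)^{3/2}+\rho(1-\kappa\beta^3)}.$$ If $\varepsilon>\varepsilon_c$, then $P_0$ is an asymptotically stable equilibrium point. If $0<\varepsilon<\varepsilon_c$, then $P_0$ is unstable.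
   Context: This system is the nondimensionalized model of a steam engine coupled with a hexagonal centrifugal governor with a spring. Here $x$ is the angle of the governor arms, $y$ is a rescaled angular velocity of the arms, and $z$ is a rescaled engine speed. The parameter $\varepsilon$ is a rescaled friction coefficient, $\rho$ is a ratio of lengths, and $\kappa$ is a rescaled spring constant. The point $P_0$ is the unique equilibrium of the system in the domain $(0,\pi/2)\times\mathbb R\times[0,\infty)$. *)

theory Defs
  imports "HOL-Analysis.Analysis"
begin

type_synonym state = "real \<times> real \<times> real"

definition governor_field ::
  "real \<Rightarrow> real \<Rightarrow> real \<Rightarrow> real \<Rightarrow> real \<Rightarrow> state \<Rightarrow> state" where
  "governor_field \<alpha> \<beta> \<epsilon> \<rho> \<kappa> =
     (\<lambda>(x, y, z). (y,
        \<rho> * z\<^sup>2 * cos x + (z\<^sup>2 + \<kappa>) * sin x * cos x - sin x - \<epsilon> * y,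
        \<alpha> * (cos x - \<beta>)))"

definition governor_P0 :: "real \<Rightarrow> real \<Rightarrow> real \<Rightarrow> state" where
  "governor_P0 \<beta> \<rho> \<kappa> =
     (arccos \<beta>, 0,
      (sqrt (1 - \<kappa> * \<beta>) * (1 - \<beta>\<^sup>2) powr (1/4)) /
      (sqrt \<beta> * sqrt (\<rho> + sqrt (1 - \<beta>\<^sup>2))))"

definition governor_eps_c :: "real \<Rightarrow> real \<Rightarrow> real \<Rightarrow> real \<Rightarrow> real" where
  "governor_eps_c \<alpha> \<beta> \<rho> \<kappa> =
     (2 * \<alpha> * \<beta> powr (3/2) * (1 - \<beta>\<^sup>2) powr (3/4) * sqrt (1 - \<kappa> * \<beta>)
        * (\<rho> + sqrt (1 - \<beta>\<^sup>2)) powr (3/2)) /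
     ((1 - \<beta>\<^sup>2) powr (3/2) + \<rho> * (1 - \<kappa> * \<beta>^3))"

definition is_solution_on :: "(state \<Rightarrow> state) \<Rightarrow> real set \<Rightarrow> (real \<Rightarrow> state) \<Rightarrow> bool" where
  "is_solution_on f I \<phi> \<longleftrightarrow>
     (\<forall>t\<in>I. (\<phi> has_vector_derivative f (\<phi> t)) (at t within I))"

definition lyapunov_stable :: "(state \<Rightarrow> state) \<Rightarrow> state \<Rightarrow> bool" where
  "lyapunov_stable f p \<longleftrightarrow>
     (\<forall>e>0. \<exists>d>0. \<forall>x0. dist x0 p < d \<longrightarrow>
        (\<exists>\<phi>. is_solution_on f {0..} \<phi> \<and> \<phi> 0 = x0) \<and>
        (\<forall>T \<phi>. T > 0 \<longrightarrow> is_solution_on f {0..<T} \<phi> \<longrightarrow> \<phi> 0 = x0 \<longrightarrow>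
            (\<forall>t\<in>{0..<T}. dist (\<phi> t) p < e)))"

definition asymptotically_stable :: "(state \<Rightarrow> state) \<Rightarrow> state \<Rightarrow> bool" where
  "asymptotically_stable f p \<longleftrightarrow>
     lyapunov_stable f p \<and>
     (\<exists>\<eta>>0. \<forall>\<phi>. is_solution_on f {0..} \<phi> \<longrightarrow> dist (\<phi> 0) p < \<eta> \<longrightarrow>
        (\<phi> \<longlongrightarrow> p) at_top)"

end

theory Submission
  imports Defs "HOL-Real_Asymp.Real_Asymp"
begin

primrec picard :: "('a::banach \<Rightarrow> 'a) \<Rightarrow> 'a \<Rightarrow> nat \<Rightarrow> real \<Rightarrow> 'a" where
  "picard f x0 0 = (\<lambda>t. x0)"
| "picard f x0 (Suc n) = (\<lambda>t. x0 + integral {0..t} (\<lambda>s. f (picard f x0 n s)))"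

lemma lip_cont:
  fixes f :: "'a::real_normed_vector \<Rightarrow> 'b::real_normed_vector"
  assumes "\<And>u v. norm (f u - f v) \<le> L * norm (u - v)" "L \<ge> 0"
  shows "continuous_on S f"
proof (rule continuous_on_subset[of UNIV])
  have "(L)-lipschitz_on UNIV f" using assms by (intro lipschitz_onI) (auto simp: dist_norm)
  thus "continuous_on UNIV f" by (rule lipschitz_on_continuous_on)
qed auto

lemma picard_cont:
  fixes f :: "'a::banach \<Rightarrow> 'a"
  assumes "continuous_on UNIV f"
  shows "continuous_on {0..T} (picard f x0 n)"
proof (induction n)
  case 0 then show ?case by simp
next
  case (Suc n)
  have "continuous_on {0..T} (\<lambda>s. f (picard f x0 n s))"
    using Suc continuous_on_compose2[OF assms Suc] by auto
  hence "(\<lambda>s. f (picard f x0 n s)) integrable_on {0..T}" by (rule integrable_continuous_real)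
  from indefinite_integral_continuous_1[OF this] show ?case
    by (auto intro!: continuous_intros)
qed

lemma power_has_integral:
  assumes "0 \<le> t"
  shows "((\<lambda>s::real. s ^ k) has_integral t ^ Suc k / Suc k) {0..t}"
proof -
  have "((\<lambda>s::real. s ^ k) has_integral ((\<lambda>s. s ^ Suc k / Suc k) t - (\<lambda>s. s ^ Suc k / Suc k) 0)) {0..t}"
  proof (rule fundamental_theorem_of_calculus[OF assms])
    fix x
    have "((\<lambda>s. s ^ Suc k / Suc k) has_real_derivative (real (Suc k) * x ^ (Suc k - 1)) / Suc k) (at x within {0..t})"
      using DERIV_cdivide[OF DERIV_pow[of "Suc k" x "{0..t}"], of "real (Suc k)"] by simp
    hence "((\<lambda>s. s ^ Suc k / Suc k) has_real_derivative x ^ k) (at x within {0..t})"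
      by (simp del: of_nat_Suc)
    thus "((\<lambda>s. s ^ Suc k / Suc k) has_vector_derivative x ^ k) (at x within {0..t})"
      by (simp add: has_real_derivative_iff_has_vector_derivative)
  qed
  thus ?thesis by simp
qed

lemma picard_bound:
  fixes f :: "'a::banach \<Rightarrow> 'a"
  assumes lip: "\<And>u v. norm (f u - f v) \<le> L * norm (u - v)" and L: "0 \<le> L"
  shows "0 \<le> t \<Longrightarrow> norm (picard f x0 (Suc n) t - picard f x0 n t)
           \<le> norm (f x0) * L ^ n * t ^ Suc n / fact (Suc n)"
proof (induction n arbitrary: t)
  case 0
  then show ?case by (simp add: integral_const_real content_real)
next
  case (Suc n)
  have cf: "continuous_on UNIV f" by (rule lip_cont[OF lip L])
  have int: "(\<lambda>s. f (picard f x0 m s)) integrable_on {0..t}" for m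
    by (rule integrable_continuous_real, rule continuous_on_compose2[OF cf picard_cont[OF cf]]) auto
  have "picard f x0 (Suc (Suc n)) t - picard f x0 (Suc n) t
      = integral {0..t} (\<lambda>s. f (picard f x0 (Suc n) s) - f (picard f x0 n s))"
  proof -
    have a: "\<And>m t. picard f x0 (Suc m) t = x0 + integral {0..t} (\<lambda>s. f (picard f x0 m s))" by simp
    show ?thesis using a[of "Suc n" t] a[of n t] int[of n] int[of "Suc n"]
      by (simp del: picard.simps add: integral_diff)
  qed
  also have "norm \<dots> \<le> integral {0..t} (\<lambda>s. L * (norm (f x0) * L ^ n * s ^ Suc n / fact (Suc n)))"
  proof (rule integral_norm_bound_integral)
    show "(\<lambda>s. f (picard f x0 (Suc n) s) - f (picard f x0 n s)) integrable_on {0..t}"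
      by (rule integrable_diff[OF int int])
    show "(\<lambda>s. L * (norm (f x0) * L ^ n * s ^ Suc n / fact (Suc n))) integrable_on {0..t}"
      by (intro integrable_continuous_real continuous_intros) auto
    fix s assume s: "s \<in> {0..t}"
    have "norm (f (picard f x0 (Suc n) s) - f (picard f x0 n s))
        \<le> L * norm (picard f x0 (Suc n) s - picard f x0 n s)" by (rule lip)
    also have "\<dots> \<le> L * (norm (f x0) * L ^ n * s ^ Suc n / fact (Suc n))"
      using mult_left_mono[OF Suc.IH[of s] L] s by simp
    finally show "norm (f (picard f x0 (Suc n) s) - f (picard f x0 n s))
        \<le> L * (norm (f x0) * L ^ n * s ^ Suc n / fact (Suc n))" .
  qed
  also have "integral {0..t} (\<lambda>s. L * (norm (f x0) * L ^ n * s ^ Suc n / fact (Suc n)))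
      = norm (f x0) * L ^ Suc n * t ^ Suc (Suc n) / fact (Suc (Suc n))"
  proof -
    have "((\<lambda>s. (L * norm (f x0) * L ^ n / fact (Suc n)) * s ^ Suc n) has_integral
           (L * norm (f x0) * L ^ n / fact (Suc n)) * (t ^ Suc (Suc n) / Suc (Suc n))) {0..t}"
      by (rule has_integral_mult_right, rule power_has_integral, fact)
    hence "integral {0..t} (\<lambda>s. (L * norm (f x0) * L ^ n / fact (Suc n)) * s ^ Suc n)
         = (L * norm (f x0) * L ^ n / fact (Suc n)) * (t ^ Suc (Suc n) / Suc (Suc n))"
      by (rule integral_unique)
    moreover have "(\<lambda>s. L * (norm (f x0) * L ^ n * s ^ Suc n / fact (Suc n)))
        = (\<lambda>s. (L * norm (f x0) * L ^ n / fact (Suc n)) * s ^ Suc n)" by (auto simp: field_simps)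
    ultimately show ?thesis
      by (simp add: fact_Suc[of "Suc n"] field_simps del: fact_Suc of_nat_Suc)
  qed
  finally show ?case .
qed

lemma picard_exists:
  fixes f :: "'a::banach \<Rightarrow> 'a"
  assumes lip: "\<And>u v. norm (f u - f v) \<le> L * norm (u - v)" and L: "0 \<le> L"
  shows "\<exists>\<phi>. \<phi> 0 = x0 \<and> (\<forall>t\<ge>0. (\<phi> has_vector_derivative f (\<phi> t)) (at t within {0..}))"
proof -
  define d where "d i t = picard f x0 (Suc i) t - picard f x0 i t" for i t
  define \<phi> where "\<phi> t = x0 + (\<Sum>i. d i t)" for t
  define M where "M = norm (f x0)"
  have cf: "continuous_on UNIV f" by (rule lip_cont[OF lip L])
  have unif: "uniform_limit {0..T} (picard f x0) \<phi> sequentially" for T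
  proof -
    have "uniform_limit {0..T} (\<lambda>n t. \<Sum>i<n. d i t) (\<lambda>t. \<Sum>i. d i t) sequentially"
    proof (rule Weierstrass_m_test[where M = "\<lambda>i. M * L^i * T^Suc i / fact (Suc i)"])
      fix i t assume t: "t \<in> {0..T}"
      have "norm (d i t) \<le> M * L^i * t^Suc i / fact (Suc i)"
        unfolding d_def M_def using picard_bound[OF lip L, of t] t by auto
      also have "\<dots> \<le> M * L^i * T^Suc i / fact (Suc i)"
        using t L power_mono[of t T "Suc i"]
        by (intro divide_right_mono mult_left_mono) (auto simp: M_def)
      finally show "norm (d i t) \<le> M * L^i * T^Suc i / fact (Suc i)" .
    next
      show "summable (\<lambda>i. M * L^i * T^Suc i / fact (Suc i))"
      proof (rule summable_comparison_test)
        show "summable (\<lambda>i. (M * \<bar>T\<bar>) * (inverse (fact i) * \<bar>L * T\<bar> ^ i))"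
          by (intro summable_mult summable_exp)
        show "\<exists>N. \<forall>n\<ge>N. norm (M * L ^ n * T ^ Suc n / fact (Suc n))
                 \<le> M * \<bar>T\<bar> * (inverse (fact n) * \<bar>L * T\<bar> ^ n)"
        proof (intro exI allI impI)
          fix n :: nat
          have "norm (M * L ^ n * T ^ Suc n / fact (Suc n)) = M * \<bar>T\<bar> * \<bar>L * T\<bar> ^ n / fact (Suc n)"
            using L by (simp add: M_def abs_mult power_abs power_mult_distrib)
          also have "\<dots> \<le> M * \<bar>T\<bar> * \<bar>L * T\<bar> ^ n / fact n"
            by (intro divide_left_mono) (auto simp: M_def fact_mono)
          finally show "norm (M * L ^ n * T ^ Suc n / fact (Suc n))
                 \<le> M * \<bar>T\<bar> * (inverse (fact n) * \<bar>L * T\<bar> ^ n)" by (simp add: field_simps)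
        qed
      qed
    qed
    moreover have "picard f x0 n t = x0 + (\<Sum>i<n. d i t)" for n t
      unfolding d_def using sum_lessThan_telescope[of "\<lambda>i. picard f x0 i t" n] by simp
    ultimately show ?thesis
      unfolding uniform_limit_iff \<phi>_def by (simp add: dist_norm)
  qed
  have contphi: "continuous_on {0..T} \<phi>" for T
    by (rule uniform_limit_theorem[OF _ unif]) (auto simp: picard_cont[OF cf])
  have inteq: "\<phi> t = x0 + integral {0..t} (\<lambda>s. f (\<phi> s))" if t: "0 \<le> t" for t
  proof -
    have u2: "uniform_limit {0..t} (\<lambda>n s. f (picard f x0 n s)) (\<lambda>s. f (\<phi> s)) sequentially"
      unfolding uniform_limit_iff
    proof (intro allI impI)
      fix e :: real assume e: "e > 0"
      have "\<forall>\<^sub>F n in sequentially. \<forall>s\<in>{0..t}. dist (picard f x0 n s) (\<phi> s) < e / (L + 1)"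
        using unif[of t] e L unfolding uniform_limit_iff by auto
      then show "\<forall>\<^sub>F n in sequentially. \<forall>s\<in>{0..t}. dist (f (picard f x0 n s)) (f (\<phi> s)) < e"
      proof eventually_elim
        case (elim n)
        show ?case
        proof
          fix s assume s: "s \<in> {0..t}"
          have "dist (f (picard f x0 n s)) (f (\<phi> s)) \<le> L * dist (picard f x0 n s) (\<phi> s)"
            using lip by (simp add: dist_norm)
          also have "\<dots> \<le> L * (e / (L + 1))"
            using elim s L by (intro mult_left_mono) (auto intro: less_imp_le)
          also have "\<dots> < e" using e L by (simp add: field_simps)
          finally show "dist (f (picard f x0 n s)) (f (\<phi> s)) < e" .
        qed
      qed
    qed
    obtain I J where I: "\<And>n. ((\<lambda>s. f (picard f x0 n s)) has_integral I n) {0..t}"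
      and J: "((\<lambda>s. f (\<phi> s)) has_integral J) {0..t}" and IJ: "I \<longlonglongrightarrow> J"
      by (rule uniform_limit_integral[OF u2])
         (auto intro!: continuous_on_compose2[OF cf picard_cont[OF cf]])
    have "(\<lambda>n. picard f x0 (Suc n) t) \<longlonglongrightarrow> x0 + J"
    proof -
      have "integral {0..t} (\<lambda>s. f (picard f x0 n s)) = I n" for n using I[of n] by (rule integral_unique)
      thus ?thesis using IJ by (simp add: tendsto_add)
    qed
    moreover have "(\<lambda>n. picard f x0 (Suc n) t) \<longlonglongrightarrow> \<phi> t"
      using LIMSEQ_Suc[OF tendsto_uniform_limitI[OF unif[of t], of t]] t
      by (simp del: picard.simps)
    ultimately have "\<phi> t = x0 + J" using LIMSEQ_unique by blast
    thus ?thesis using J by (simp add: integral_unique)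
  qed
  have "(\<phi> has_vector_derivative f (\<phi> t)) (at t within {0..})" if t: "0 \<le> t" for t
  proof -
    have c: "continuous_on {0..t+1} (\<lambda>s. f (\<phi> s))"
      by (rule continuous_on_compose2[OF cf contphi]) auto
    have "((\<lambda>u. x0 + integral {0..u} (\<lambda>s. f (\<phi> s))) has_vector_derivative f (\<phi> t)) (at t within {0..t+1})"
      using integral_has_vector_derivative[OF c, of t] t
      by (auto intro!: derivative_eq_intros)
    hence "(\<phi> has_vector_derivative f (\<phi> t)) (at t within {0..t+1})"
      by (rule has_vector_derivative_transform[rotated 2]) (use t inteq in auto)
    moreover have "at t within {0..t+1} = at t within {0..}"
      by (rule at_within_nhd[where S="{t - 1 <..< t + 1}"]) auto
    ultimately show ?thesis by simp
  qed
  moreover have "\<phi> 0 = x0" using inteq[of 0] by simp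
  ultimately show ?thesis by blast
qed

lemma exp_compare:
  fixes g g' :: "real \<Rightarrow> real"
  assumes t: "0 \<le> t"
    and d: "\<And>s. s \<in> {0..t} \<Longrightarrow> (g has_real_derivative g' s) (at s within {0..t})"
    and le: "\<And>s. s \<in> {0..t} \<Longrightarrow> g' s \<le> - \<gamma> * g s"
  shows "g t \<le> exp (- \<gamma> * t) * g 0"
proof -
  define h where "h s = exp (\<gamma> * s) * g s" for s
  define h' where "h' s = exp (\<gamma> * s) * \<gamma> * g s + exp (\<gamma> * s) * g' s" for s
  have hd: "(h has_derivative (\<lambda>x. x * h' s)) (at s within {0..t})" if "0 \<le> s" "s \<le> t" for s
  proof -
    have "(h has_real_derivative h' s) (at s within {0..t})"
      unfolding h_def h'_def using d[of s] that
      by (auto intro!: derivative_eq_intros)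
    thus ?thesis by (simp add: has_field_derivative_def mult.commute[of _ "h' s"])
  qed
  obtain \<xi> where "\<xi> \<in> {0..t}" "h t - h 0 = (t - 0) * h' \<xi>"
    using mvt_very_simple[OF t hd] by auto
  moreover have "h' \<xi> \<le> 0"
  proof -
    have "h' \<xi> = exp (\<gamma> * \<xi>) * (\<gamma> * g \<xi> + g' \<xi>)" by (simp add: h'_def algebra_simps)
    moreover have "\<gamma> * g \<xi> + g' \<xi> \<le> 0" using le[OF \<open>\<xi> \<in> {0..t}\<close>] by simp
    ultimately show ?thesis by (simp add: mult_nonneg_nonpos)
  qed
  ultimately have "h t \<le> h 0" using t mult_nonneg_nonpos[of t "h' \<xi>"] by simp
  hence "exp (\<gamma> * t) * g t \<le> g 0" by (simp add: h_def)
  hence "exp (- \<gamma> * t) * (exp (\<gamma> * t) * g t) \<le> exp (- \<gamma> * t) * g 0"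
    by (rule mult_left_mono) simp
  thus ?thesis by (simp add: mult.assoc[symmetric] exp_add[symmetric])
qed

lemma sol_comp_deriv:
  fixes V :: "'a::real_normed_vector \<Rightarrow> real"
  assumes "(\<phi> has_vector_derivative w) (at s within S)"
    and "(V has_derivative DV) (at (\<phi> s))"
  shows "((\<lambda>s. V (\<phi> s)) has_real_derivative DV w) (at s within S)"
proof -
  have "((V \<circ> \<phi>) has_vector_derivative DV w) (at s within S)"
    by (rule vector_derivative_diff_chain_within[OF assms(1)])
       (rule has_derivative_subset[OF assms(2)], simp)
  thus ?thesis by (simp add: has_real_derivative_iff_has_vector_derivative o_def)
qed

lemma trap:
  fixes f :: "state \<Rightarrow> state" and V :: "state \<Rightarrow> real"
  assumes Vd: "\<And>u. (V has_derivative DV u) (at u)"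
    and low: "\<And>u. lam * (norm (u - p))\<^sup>2 \<le> V u" and l1: "lam > 0" and r: "r > 0" and g: "\<gamma> \<ge> 0"
    and dec: "\<And>u. norm (u - p) \<le> r \<Longrightarrow> DV u (f u) \<le> - \<gamma> * V u"
    and I0o: "\<forall>t\<in>I. \<forall>s\<in>{0..t}. s \<in> I"
    and sol: "is_solution_on f I \<phi>"
    and st: "V (\<phi> 0) < lam * r\<^sup>2"
    and tI: "t \<in> I" and t0: "0 \<le> t"
  shows "norm (\<phi> t - p) < r \<and> V (\<phi> t) \<le> exp (- \<gamma> * t) * V (\<phi> 0)"
proof -
  have I0: "\<And>t s. t \<in> I \<Longrightarrow> s \<in> {0..t} \<Longrightarrow> s \<in> I" using I0o by blast
  have der: "(\<phi> has_vector_derivative f (\<phi> s)) (at s within I)" if "s \<in> I" for s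
    using sol that unfolding is_solution_on_def by auto
  have cont: "continuous_on I \<phi>"
    unfolding continuous_on_eq_continuous_within
    using der by (auto intro: has_vector_derivative_continuous)
  have Vnn: "V u \<ge> 0" for u using low[of u] l1 by (smt (verit) mult_nonneg_nonneg zero_le_power2)
  have small: "norm (u - p) < r" if "V u < lam * r\<^sup>2" for u
  proof -
    have "lam * (norm (u - p))\<^sup>2 < lam * r\<^sup>2" using low[of u] that by simp
    hence "(norm (u - p))\<^sup>2 < r\<^sup>2" using l1 by simp
    thus ?thesis using r by (smt (verit) norm_ge_zero power_mono)
  qed
  have seg: "V (\<phi> s) \<le> exp (- \<gamma> * s) * V (\<phi> 0)"
    if sI: "s \<in> I" and s0: "0 \<le> s" and inb: "\<forall>\<sigma>\<in>{0..s}. norm (\<phi> \<sigma> - p) \<le> r" for s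
  proof (rule exp_compare[OF s0])
    fix \<sigma> assume \<sigma>: "\<sigma> \<in> {0..s}"
    have "\<sigma> \<in> I" using I0[OF sI \<sigma>] .
    have "(\<phi> has_vector_derivative f (\<phi> \<sigma>)) (at \<sigma> within {0..s})"
      by (rule has_vector_derivative_within_subset[OF der[OF \<open>\<sigma> \<in> I\<close>]]) (use I0 sI in auto)
    thus "((\<lambda>s. V (\<phi> s)) has_real_derivative DV (\<phi> \<sigma>) (f (\<phi> \<sigma>))) (at \<sigma> within {0..s})"
      by (rule sol_comp_deriv[OF _ Vd])
    show "DV (\<phi> \<sigma>) (f (\<phi> \<sigma>)) \<le> - \<gamma> * V (\<phi> \<sigma>)" using dec inb \<sigma> by auto
  qed
  have p0: "norm (\<phi> 0 - p) < r" using small st by auto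
  define B where "B = {s \<in> {0..t}. \<forall>\<sigma>\<in>{0..s}. norm (\<phi> \<sigma> - p) \<le> r}"
  define t1 where "t1 = Sup B"
  have B0: "0 \<in> B" using p0 t0 by (auto simp: B_def)
  have Bbdd: "bdd_above B" by (auto simp: B_def bdd_above_def)
  have t1ge: "0 \<le> t1" unfolding t1_def by (rule cSup_upper[OF B0 Bbdd])
  have t1le: "t1 \<le> t" unfolding t1_def using B0 by (intro cSup_least) (auto simp: B_def)
  have t1I: "t1 \<in> I" using I0[OF tI] t1ge t1le by auto
  have below: "norm (\<phi> \<sigma> - p) \<le> r" if "0 \<le> \<sigma>" "\<sigma> < t1" for \<sigma>
  proof -
    obtain s where "s \<in> B" "\<sigma> < s" using \<open>\<sigma> < t1\<close> less_cSup_iff[OF _ Bbdd] B0 unfolding t1_def by blast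
    thus ?thesis using that by (auto simp: B_def)
  qed
  have all_t1: "\<forall>\<sigma>\<in>{0..t1}. norm (\<phi> \<sigma> - p) \<le> r"
  proof (cases "t1 = 0")
    case True thus ?thesis using p0 by auto
  next
    case False
    hence t1p: "0 < t1" using t1ge by simp
    have "(\<lambda>\<sigma>. norm (\<phi> \<sigma> - p)) ` closure {0..<t1} \<subseteq> {..r}"
    proof (rule image_closure_subset)
      have "continuous_on {0..t1} \<phi>" by (rule continuous_on_subset[OF cont]) (use I0 t1I in auto)
      thus "continuous_on (closure {0..<t1}) (\<lambda>\<sigma>. norm (\<phi> \<sigma> - p))"
        using t1p by (auto intro!: continuous_intros)
      show "closed {..r}" by simp
      show "(\<lambda>\<sigma>. norm (\<phi> \<sigma> - p)) ` {0..<t1} \<subseteq> {..r}" using below by auto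
    qed
    thus ?thesis using t1p by auto
  qed
  have strict: "norm (\<phi> \<sigma> - p) < r" if "\<sigma> \<in> {0..t1}" for \<sigma>
  proof -
    have \<sigma>I: "\<sigma> \<in> I" using I0[OF t1I that] .
    have "V (\<phi> \<sigma>) \<le> exp (- \<gamma> * \<sigma>) * V (\<phi> 0)"
      using seg[OF \<sigma>I] that all_t1 by auto
    also have "\<dots> \<le> V (\<phi> 0)"
      using g that Vnn[of "\<phi> 0"] by (intro mult_left_le_one_le) auto
    finally show ?thesis using st small by auto
  qed
  have "t1 = t"
  proof (rule ccontr)
    assume "t1 \<noteq> t" hence lt: "t1 < t" using t1le by simp
    have "continuous (at t1 within I) (\<lambda>\<sigma>. norm (\<phi> \<sigma> - p))"
      using cont t1I by (auto simp: continuous_on_eq_continuous_within intro!: continuous_intros)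
    moreover have "r - norm (\<phi> t1 - p) > 0" using strict[of t1] t1ge by auto
    ultimately obtain \<delta> where \<delta>: "\<delta> > 0"
      "\<And>\<sigma>. \<sigma> \<in> I \<Longrightarrow> dist \<sigma> t1 < \<delta> \<Longrightarrow> dist (norm (\<phi> \<sigma> - p)) (norm (\<phi> t1 - p)) < r - norm (\<phi> t1 - p)"
      unfolding continuous_within_eps_delta by metis
    define s' where "s' = min t (t1 + \<delta>/2)"
    have "s' \<in> B"
      unfolding B_def
    proof (intro CollectI conjI ballI)
      show "s' \<in> {0..t}" using t1ge \<delta> lt by (auto simp: s'_def)
      fix \<sigma> assume \<sigma>: "\<sigma> \<in> {0..s'}"
      show "norm (\<phi> \<sigma> - p) \<le> r"
      proof (cases "\<sigma> \<le> t1")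
        case True thus ?thesis using all_t1 \<sigma> by auto
      next
        case False
        have "\<sigma> \<in> I" using I0[OF tI] \<sigma> by (auto simp: s'_def)
        moreover have "dist \<sigma> t1 < \<delta>" using False \<sigma> \<delta> by (auto simp: s'_def dist_real_def)
        ultimately show ?thesis using \<delta>(2)[of \<sigma>] by (auto simp: dist_real_def)
      qed
    qed
    hence "s' \<le> t1" unfolding t1_def by (rule cSup_upper[OF _ Bbdd])
    thus False using lt \<delta> by (auto simp: s'_def)
  qed
  thus ?thesis using strict[of t] seg[OF tI t0] all_t1 t0 by auto
qed

lemma sphere_state_ne: "sphere (0::state) 1 \<noteq> {}"
proof -
  have "norm ((1::real), (0::real), (0::real)) = 1" by (simp add: norm_Pair)
  hence "((1::real), (0::real), (0::real)) \<in> sphere (0::state) 1" by simp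
  thus ?thesis by blast
qed

lemma qf_lower:
  fixes q :: "state \<Rightarrow> real"
  assumes c: "continuous_on UNIV q" and h: "\<And>t u. q (t *\<^sub>R u) = t\<^sup>2 * q u"
    and p: "\<And>u. u \<noteq> 0 \<Longrightarrow> q u > 0"
  shows "\<exists>l>0. \<forall>u. l * (norm u)\<^sup>2 \<le> q u"
proof -
  obtain u0 where u0: "u0 \<in> sphere 0 1" "\<And>u. u \<in> sphere 0 1 \<Longrightarrow> q u0 \<le> q u"
    using continuous_attains_inf[OF compact_sphere sphere_state_ne continuous_on_subset[OF c]] by auto
  have "u0 \<noteq> 0" using u0 by auto
  hence l: "q u0 > 0" by (rule p)
  have "q u0 * (norm u)\<^sup>2 \<le> q u" for u
  proof (cases "u = 0")
    case True thus ?thesis using h[of 0 u] by simp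
  next
    case False
    have "u = norm u *\<^sub>R (u /\<^sub>R norm u)" using False by simp
    hence "q u = (norm u)\<^sup>2 * q (u /\<^sub>R norm u)" using h by metis
    moreover have "q u0 \<le> q (u /\<^sub>R norm u)" using u0(2)[of "u /\<^sub>R norm u"] False by simp
    ultimately show ?thesis by (metis mult.commute mult_left_mono zero_le_power2)
  qed
  thus ?thesis using l by blast
qed

lemma qf_upper:
  fixes q :: "state \<Rightarrow> real"
  assumes c: "continuous_on UNIV q" and h: "\<And>t u. q (t *\<^sub>R u) = t\<^sup>2 * q u"
  shows "\<exists>L>0. \<forall>u. q u \<le> L * (norm u)\<^sup>2"
proof -
  obtain u0 where u0: "u0 \<in> sphere 0 1" "\<And>u. u \<in> sphere 0 1 \<Longrightarrow> q u \<le> q u0"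
    using continuous_attains_sup[OF compact_sphere sphere_state_ne continuous_on_subset[OF c]] by auto
  define L where "L = max (q u0) 1"
  have "q u \<le> L * (norm u)\<^sup>2" for u
  proof (cases "u = 0")
    case True thus ?thesis using h[of 0 u] by simp
  next
    case False
    have "u = norm u *\<^sub>R (u /\<^sub>R norm u)" using False by simp
    hence "q u = (norm u)\<^sup>2 * q (u /\<^sub>R norm u)" using h by metis
    moreover have "q (u /\<^sub>R norm u) \<le> L" using u0(2)[of "u /\<^sub>R norm u"] False by (simp add: L_def)
    ultimately show ?thesis by (metis mult.commute mult_left_mono zero_le_power2)
  qed
  moreover have "L > 0" by (simp add: L_def)
  ultimately show ?thesis by blast
qed

abbreviation cX :: "state \<Rightarrow> real" where "cX v \<equiv> fst v"
abbreviation cY :: "state \<Rightarrow> real" where "cY v \<equiv> fst (snd v)"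
abbreviation cW :: "state \<Rightarrow> real" where "cW v \<equiv> snd (snd v)"

definition qQ :: "real \<Rightarrow> real \<Rightarrow> real \<Rightarrow> real \<Rightarrow> real \<Rightarrow> state \<Rightarrow> real" where
  "qQ a e B k m v = (B * cW v - a * cX v)\<^sup>2 / 2 + a * (cY v)\<^sup>2 / 2 + k * B * cX v * cY v
      + e * (k * B) * (cX v)\<^sup>2 / 2 + m * (B * cW v - a * cX v) * (cX v - cY v / e)"

definition gradQ :: "real \<Rightarrow> real \<Rightarrow> real \<Rightarrow> real \<Rightarrow> real \<Rightarrow> state \<Rightarrow> state" where
  "gradQ a e B k m v =
    (- a * (B * cW v - a * cX v) + k * B * cY v + e * (k * B) * cX v
       + m * (- a * (cX v - cY v / e) + (B * cW v - a * cX v)),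
     a * cY v + k * B * cX v - m * (B * cW v - a * cX v) / e,
     B * (B * cW v - a * cX v) + m * B * (cX v - cY v / e))"

definition Dl :: "real \<Rightarrow> real \<Rightarrow> real \<Rightarrow> real \<Rightarrow> state \<Rightarrow> state" where
  "Dl a e B k v = (cY v, - a * cX v - e * cY v + B * cW v, - k * cX v)"

lemma qQ_deriv: "(qQ a e B k m has_derivative (\<lambda>h. inner (gradQ a e B k m v) h)) (at v)"
  unfolding qQ_def divide_inverse
  apply (rule has_derivative_eq_rhs)
   apply (rule derivative_eq_intros | simp)+
  apply (rule ext)
  apply (cases v)
  apply (simp add: inner_prod_def gradQ_def split: prod.splits)
  apply (simp add: field_simps)
  apply (simp add: diff_divide_distrib)
  done

lemma qQ_cont: "continuous_on UNIV (qQ a e B k m)"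
  unfolding qQ_def divide_inverse by (intro continuous_intros)

lemma qQ_hom: "qQ a e B k m (t *\<^sub>R v) = t\<^sup>2 * qQ a e B k m v"
  unfolding qQ_def by (simp add: algebra_simps power2_eq_square)

lemma gradQ_hom: "gradQ a e B k m (t *\<^sub>R v) = t *\<^sub>R gradQ a e B k m v"
  unfolding gradQ_def by (simp add: algebra_simps)

lemma gradQ_cont: "continuous_on UNIV (gradQ a e B k m)"
  unfolding gradQ_def divide_inverse by (intro continuous_intros)

lemma grad_bound: "\<exists>K>0. \<forall>v h. \<bar>inner (gradQ a e B k m v) h\<bar> \<le> K * norm v * norm h"
proof -
  have "\<exists>L>0. \<forall>u. (norm (gradQ a e B k m u))\<^sup>2 \<le> L * (norm u)\<^sup>2"
    by (rule qf_upper) (auto simp: gradQ_hom power_mult_distrib intro!: continuous_intros gradQ_cont)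
  then obtain L where L: "L > 0" "\<And>u. (norm (gradQ a e B k m u))\<^sup>2 \<le> L * (norm u)\<^sup>2"
    by blast
  have "\<bar>inner (gradQ a e B k m v) h\<bar> \<le> sqrt L * norm v * norm h" for v h
  proof -
    have "norm (gradQ a e B k m v) \<le> sqrt L * norm v"
    proof -
      have "norm (gradQ a e B k m v) \<le> sqrt (L * (norm v)\<^sup>2)" using L(2)[of v] by (rule real_le_rsqrt)
      thus ?thesis by (simp add: real_sqrt_mult)
    qed
    hence "norm (gradQ a e B k m v) * norm h \<le> sqrt L * norm v * norm h"
      by (simp add: mult_right_mono)
    thus ?thesis using Cauchy_Schwarz_ineq2[of "gradQ a e B k m v" h] by linarith
  qed
  thus ?thesis using L(1) by (intro exI[of _ "sqrt L"]) auto
qed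

lemma lin_ineq:
  fixes a e B k \<sigma> \<delta> X Y W :: real
  assumes a: "a > 0" and e: "e > 0" and B: "B > 0" and k: "k > 0"
    and sg: "\<sigma> = 1 \<or> \<sigma> = -1" and A: "\<sigma> * (e*a - k*B) > 0" and d: "\<delta> > 0"
    and hd: "\<delta> * (e + a/e + (e*a - k*B)\<^sup>2/(2*(k*B)*e\<^sup>2)) \<le> \<sigma> * (e*a - k*B) / 2"
  shows "- \<sigma> * inner (gradQ a e B k (\<sigma>*\<delta>) (X,Y,W)) (Dl a e B k (X,Y,W))
     \<ge> \<delta>*(k*B)/2 * X\<^sup>2 + \<delta>/e * (B*W - a*X - e*Y)\<^sup>2 + \<sigma>*(e*a-k*B)/2 * Y\<^sup>2"
proof -
  define c where "c = k * B"
  define D where "D = e*a - c"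
  define Z where "Z = B*W - a*X - e*Y"
  have c: "c > 0" using k B by (simp add: c_def)
  have id1: "- \<sigma> * inner (gradQ a e B k (\<sigma>*\<delta>) (X,Y,W)) (Dl a e B k (X,Y,W))
      = \<sigma>*D*Y\<^sup>2 + \<delta>*(c*X\<^sup>2 + Z\<^sup>2/e - (e + a/e)*Y\<^sup>2 + (D/e)*X*Y)"
    using sg
  proof
    assume "\<sigma> = 1" thus ?thesis using e unfolding gradQ_def Dl_def inner_prod_def c_def D_def Z_def
      by (simp add: field_simps power2_eq_square)
  next
    assume "\<sigma> = -1" thus ?thesis using e unfolding gradQ_def Dl_def inner_prod_def c_def D_def Z_def
      by (simp add: field_simps power2_eq_square)
  qed
  have id2: "\<sigma>*D*Y\<^sup>2 + \<delta>*(c*X\<^sup>2 + Z\<^sup>2/e - (e + a/e)*Y\<^sup>2 + (D/e)*X*Y)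
      - (\<delta>*c/2 * X\<^sup>2 + \<delta>/e * Z\<^sup>2 + \<sigma>*D/2 * Y\<^sup>2)
      = (\<delta>/(2*c))*(c*X + (D/e)*Y)\<^sup>2 + (\<sigma>*D/2 - \<delta>*(e + a/e + D\<^sup>2/(2*c*e\<^sup>2)))*Y\<^sup>2"
    using e c by (simp add: field_simps power2_eq_square)
  have "0 \<le> (\<delta>/(2*c))*(c*X + (D/e)*Y)\<^sup>2" using d c by simp
  moreover have "0 \<le> (\<sigma>*D/2 - \<delta>*(e + a/e + D\<^sup>2/(2*c*e\<^sup>2)))*Y\<^sup>2"
    using hd unfolding D_def c_def by simp
  ultimately show ?thesis using id1 id2 unfolding c_def D_def Z_def by linarith
qed

lemma Q_lower:
  fixes a e B k \<delta> X Y W :: real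
  assumes a: "a > 0" and e: "e > 0" and B: "B > 0" and k: "k > 0"
    and D: "e*a - k*B > 0" and d: "\<delta> \<ge> 0"
    and d1: "\<delta>\<^sup>2 \<le> e*(k*B)/8" and d2: "\<delta>\<^sup>2 \<le> (e*a - k*B)*e/32"
  shows "qQ a e B k \<delta> (X,Y,W) \<ge> (B*W - a*X)\<^sup>2/4 + e*(k*B)*(X + Y/e)\<^sup>2/4 + (e*a - k*B)/(4*e)*Y\<^sup>2"
proof -
  define c where "c = k * B"
  define S where "S = B*W - a*X"
  define P where "P = X + Y/e"
  define D where "D = e*a - c"
  have id: "qQ a e B k \<delta> (X,Y,W) - (S\<^sup>2/4 + e*c*P\<^sup>2/4 + D/(4*e)*Y\<^sup>2)
     = (S + 4*\<delta>*P)\<^sup>2/8 + (S - 8*\<delta>*Y/e)\<^sup>2/8 + (e*c/4 - 2*\<delta>\<^sup>2)*P\<^sup>2 + (D/(4*e) - 8*\<delta>\<^sup>2/e\<^sup>2)*Y\<^sup>2"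
    using e unfolding qQ_def c_def S_def P_def D_def by (simp add: field_simps power2_eq_square)
  have "0 \<le> (e*c/4 - 2*\<delta>\<^sup>2)*P\<^sup>2" using d1 unfolding c_def by simp
  moreover have "D/(4*e) - 8*\<delta>\<^sup>2/e\<^sup>2 \<ge> 0"
  proof -
    have "\<delta>\<^sup>2 \<le> D*e/32" using d2 by (simp add: D_def c_def)
    hence "8*\<delta>\<^sup>2/e\<^sup>2 \<le> 8*(D*e/32)/e\<^sup>2" using e
      by (intro divide_right_mono) auto
    also have "\<dots> = D/(4*e)" using e by (simp add: field_simps power2_eq_square)
    finally show ?thesis by simp
  qed
  hence "0 \<le> (D/(4*e) - 8*\<delta>\<^sup>2/e\<^sup>2)*Y\<^sup>2" by simp
  moreover have "0 \<le> (S + 4*\<delta>*P)\<^sup>2/8" "0 \<le> (S - 8*\<delta>*Y/e)\<^sup>2/8" by simp_all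
  ultimately have "qQ a e B k \<delta> (X,Y,W) \<ge> S\<^sup>2/4 + e*c*P\<^sup>2/4 + D/(4*e)*Y\<^sup>2" using id by linarith
  thus ?thesis by (simp add: c_def S_def P_def D_def)
qed

lemma exp_decay_lim:
  assumes "\<gamma> > 0"
  shows "((\<lambda>t. sqrt (exp (- \<gamma> * t) * c)) \<longlongrightarrow> 0) at_top"
proof -
  have "((\<lambda>t. exp (- \<gamma> * t)) \<longlongrightarrow> 0) at_top" using assms by real_asymp
  hence "((\<lambda>t. exp (- \<gamma> * t) * c) \<longlongrightarrow> 0 * c) at_top" by (rule tendsto_mult_right)
  hence "((\<lambda>t. sqrt (exp (- \<gamma> * t) * c)) \<longlongrightarrow> sqrt (0 * c)) at_top" by (rule tendsto_real_sqrt)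
  thus ?thesis by simp
qed

lemma stable_from_lyap:
  fixes F :: "state \<Rightarrow> state" and p :: state and V :: "state \<Rightarrow> real"
  assumes Vd: "\<And>u. (V has_derivative DV u) (at u)"
    and low: "\<And>u. lam * (norm (u - p))\<^sup>2 \<le> V u" and lam: "lam > 0"
    and up: "\<And>u. V u \<le> Lam * (norm (u - p))\<^sup>2" and Lam: "Lam > 0"
    and dec: "\<And>u. norm (u - p) \<le> r0 \<Longrightarrow> DV u (F u) \<le> - \<gamma> * V u" and r0: "r0 > 0" and g: "\<gamma> > 0"
    and ext: "\<And>r. 0 < r \<Longrightarrow> r \<le> r0 \<Longrightarrow> \<exists>Ft L. L \<ge> 0 \<and> (\<forall>u v. norm (Ft u - Ft v) \<le> L * norm (u - v))
                   \<and> (\<forall>u. norm (u - p) \<le> r \<longrightarrow> Ft u = F u)"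
  shows "asymptotically_stable F p"
proof -
  have key: "\<exists>d>0. \<forall>x0. dist x0 p < d \<longrightarrow>
        (\<exists>\<phi>. is_solution_on F {0..} \<phi> \<and> \<phi> 0 = x0) \<and>
        (\<forall>T \<phi>. T > 0 \<longrightarrow> is_solution_on F {0..<T} \<phi> \<longrightarrow> \<phi> 0 = x0 \<longrightarrow>
            (\<forall>t\<in>{0..<T}. norm (\<phi> t - p) < r)) \<and>
        (\<forall>\<phi>. is_solution_on F {0..} \<phi> \<longrightarrow> \<phi> 0 = x0 \<longrightarrow>
            (\<forall>t\<ge>0. norm (\<phi> t - p) < r \<and> V (\<phi> t) \<le> exp (- \<gamma> * t) * V (\<phi> 0)))"
    if r: "0 < r" "r \<le> r0" for r
  proof -
    define d where "d = r * sqrt (lam / Lam)"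
    have d: "d > 0" using r lam Lam by (simp add: d_def)
    have I0a: "\<forall>t\<in>{0..}. \<forall>s\<in>{0..t}. s \<in> ({0..}::real set)" by auto
    have I0b: "\<forall>t\<in>{0..<T}. \<forall>s\<in>{0..t}. s \<in> ({0..<T}::real set)" for T by auto
    have decr: "\<And>u. norm (u - p) \<le> r \<Longrightarrow> DV u (F u) \<le> - \<gamma> * V u" using dec r by auto
    have st: "V x0 < lam * r\<^sup>2" if "dist x0 p < d" for x0
    proof -
      have "norm (x0 - p) < d" using that by (simp add: dist_norm)
      hence "(norm (x0 - p))\<^sup>2 < d\<^sup>2" by (simp add: power_strict_mono)
      hence "Lam * (norm (x0 - p))\<^sup>2 < Lam * d\<^sup>2" using Lam by simp
      also have "Lam * d\<^sup>2 = lam * r\<^sup>2" using lam Lam by (simp add: d_def power_mult_distrib)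
      finally show ?thesis using up[of x0] by simp
    qed
    show ?thesis
    proof (intro exI[of _ d] conjI allI impI d)
      fix x0 assume x0: "dist x0 p < d"
      obtain Ft L where L: "L \<ge> 0" "\<And>u v. norm (Ft u - Ft v) \<le> L * norm (u - v)"
        and FtF: "\<And>u. norm (u - p) \<le> r \<Longrightarrow> Ft u = F u"
        using ext[OF r] by blast
      obtain \<phi> where \<phi>0: "\<phi> 0 = x0" and \<phi>d: "\<And>t. t \<ge> 0 \<Longrightarrow> (\<phi> has_vector_derivative Ft (\<phi> t)) (at t within {0..})"
        using picard_exists[OF L(2) L(1), of x0] by blast
      have solt: "is_solution_on Ft {0..} \<phi>" using \<phi>d by (auto simp: is_solution_on_def)
      have decFt: "\<And>u. norm (u - p) \<le> r \<Longrightarrow> DV u (Ft u) \<le> - \<gamma> * V u" using decr FtF by simp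
      have st0: "V (\<phi> 0) < lam * r\<^sup>2" using st[OF x0] \<phi>0 by simp
      have inb: "norm (\<phi> t - p) < r" if "t \<ge> 0" for t
      proof -
        have tI: "t \<in> {0..}" using that by simp
        show ?thesis using trap[OF Vd low lam r(1) less_imp_le[OF g] decFt I0a solt st0 tI that] by simp
      qed
      have "is_solution_on F {0..} \<phi>"
        unfolding is_solution_on_def
      proof
        fix t :: real assume "t \<in> {0..}"
        hence t: "t \<ge> 0" by simp
        have "Ft (\<phi> t) = F (\<phi> t)" using FtF[of "\<phi> t"] inb[OF t] by simp
        thus "(\<phi> has_vector_derivative F (\<phi> t)) (at t within {0..})" using \<phi>d[OF t] by simp
      qed
      thus "\<exists>\<phi>. is_solution_on F {0..} \<phi> \<and> \<phi> 0 = x0" using \<phi>0 by blast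
    next
      fix x0 T \<phi> assume x0: "dist x0 p < d" and T: "T > 0" and sol: "is_solution_on F {0..<T} \<phi>" and \<phi>0: "\<phi> 0 = x0"
      have st0: "V (\<phi> 0) < lam * r\<^sup>2" using st[OF x0] \<phi>0 by simp
      show "\<forall>t\<in>{0..<T}. norm (\<phi> t - p) < r"
      proof
        fix t assume t: "t \<in> {0..<T}"
        show "norm (\<phi> t - p) < r"
          using trap[OF Vd low lam r(1) less_imp_le[OF g] decr I0b sol st0 t] t by simp
      qed
    next
      fix x0 \<phi> and t :: real assume x0: "dist x0 p < d" and sol: "is_solution_on F {0..} \<phi>" and \<phi>0: "\<phi> 0 = x0"
        and t: "0 \<le> t"
      have st0: "V (\<phi> 0) < lam * r\<^sup>2" using st[OF x0] \<phi>0 by simp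
      show "norm (\<phi> t - p) < r"
        using trap[OF Vd low lam r(1) less_imp_le[OF g] decr I0a sol st0 _ t] t by (simp add: atLeast_iff)
    next
      fix x0 \<phi> and t :: real assume x0: "dist x0 p < d" and sol: "is_solution_on F {0..} \<phi>" and \<phi>0: "\<phi> 0 = x0"
        and t: "0 \<le> t"
      have st0: "V (\<phi> 0) < lam * r\<^sup>2" using st[OF x0] \<phi>0 by simp
      show "V (\<phi> t) \<le> exp (- \<gamma> * t) * V (\<phi> 0)"
        using trap[OF Vd low lam r(1) less_imp_le[OF g] decr I0a sol st0 _ t] t by (simp add: atLeast_iff)
    qed
  qed
  have ls: "lyapunov_stable F p"
    unfolding lyapunov_stable_def
  proof (intro allI impI)
    fix e :: real assume e: "e > 0"
    have m1: "0 < min e r0" using e r0 by simp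
    have m2: "min e r0 \<le> r0" by simp
    obtain d where d: "d > 0" and dd: "\<forall>x0. dist x0 p < d \<longrightarrow>
        (\<exists>\<phi>. is_solution_on F {0..} \<phi> \<and> \<phi> 0 = x0) \<and>
        (\<forall>T \<phi>. T > 0 \<longrightarrow> is_solution_on F {0..<T} \<phi> \<longrightarrow> \<phi> 0 = x0 \<longrightarrow>
            (\<forall>t\<in>{0..<T}. norm (\<phi> t - p) < min e r0)) \<and>
        (\<forall>\<phi>. is_solution_on F {0..} \<phi> \<longrightarrow> \<phi> 0 = x0 \<longrightarrow>
            (\<forall>t\<ge>0. norm (\<phi> t - p) < min e r0 \<and> V (\<phi> t) \<le> exp (- \<gamma> * t) * V (\<phi> 0)))"
      using key[OF m1 m2] by blast
    show "\<exists>d>0. \<forall>x0. dist x0 p < d \<longrightarrow>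
        (\<exists>\<phi>. is_solution_on F {0..} \<phi> \<and> \<phi> 0 = x0) \<and>
        (\<forall>T \<phi>. T > 0 \<longrightarrow> is_solution_on F {0..<T} \<phi> \<longrightarrow> \<phi> 0 = x0 \<longrightarrow>
            (\<forall>t\<in>{0..<T}. dist (\<phi> t) p < e))"
    proof (rule exI[of _ d], intro conjI d allI impI)
      fix x0 assume x0: "dist x0 p < d"
      note D = dd[rule_format, OF x0]
      show "\<exists>\<phi>. is_solution_on F {0..} \<phi> \<and> \<phi> 0 = x0" using D by (elim conjE)
    next
      fix x0 T \<phi> assume x0: "dist x0 p < d" and T: "T > 0" and sol: "is_solution_on F {0..<T} \<phi>" and \<phi>0: "\<phi> 0 = x0"
      note D = dd[rule_format, OF x0]
      have "\<forall>t\<in>{0..<T}. norm (\<phi> t - p) < min e r0"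
        using D T sol \<phi>0 by (elim conjE) (erule allE[of _ T], erule allE[of _ \<phi>], simp)
      thus "\<forall>t\<in>{0..<T}. dist (\<phi> t) p < e" by (simp add: dist_norm)
    qed
  qed
  have r0': "r0 \<le> r0" by simp
  obtain d where d: "d > 0" and dd: "\<forall>x0. dist x0 p < d \<longrightarrow>
        (\<exists>\<phi>. is_solution_on F {0..} \<phi> \<and> \<phi> 0 = x0) \<and>
        (\<forall>T \<phi>. T > 0 \<longrightarrow> is_solution_on F {0..<T} \<phi> \<longrightarrow> \<phi> 0 = x0 \<longrightarrow>
            (\<forall>t\<in>{0..<T}. norm (\<phi> t - p) < r0)) \<and>
        (\<forall>\<phi>. is_solution_on F {0..} \<phi> \<longrightarrow> \<phi> 0 = x0 \<longrightarrow>
            (\<forall>t\<ge>0. norm (\<phi> t - p) < r0 \<and> V (\<phi> t) \<le> exp (- \<gamma> * t) * V (\<phi> 0)))"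
    using key[OF r0 r0'] by blast
  have conv: "(\<phi> \<longlongrightarrow> p) at_top" if sol: "is_solution_on F {0..} \<phi>" and st: "dist (\<phi> 0) p < d" for \<phi>
  proof -
    have D3: "\<forall>t\<ge>0. norm (\<phi> t - p) < r0 \<and> V (\<phi> t) \<le> exp (- \<gamma> * t) * V (\<phi> 0)"
      using dd[rule_format, OF st] sol by (elim conjE) (erule allE[of _ \<phi>], simp)
    have b: "norm (\<phi> t - p) \<le> sqrt (exp (- \<gamma> * t) * (V (\<phi> 0) / lam))" if t: "t \<ge> 0" for t
    proof -
      have "V (\<phi> t) \<le> exp (- \<gamma> * t) * V (\<phi> 0)"
        using D3 t by blast
      hence "lam * (norm (\<phi> t - p))\<^sup>2 \<le> exp (- \<gamma> * t) * V (\<phi> 0)"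
        using low[of "\<phi> t"] by linarith
      hence "(norm (\<phi> t - p))\<^sup>2 \<le> exp (- \<gamma> * t) * (V (\<phi> 0) / lam)"
        using lam by (simp add: field_simps)
      thus ?thesis by (rule real_le_rsqrt)
    qed
    have "((\<lambda>t. \<phi> t - p) \<longlongrightarrow> 0) at_top"
    proof (rule Lim_null_comparison)
      show "\<forall>\<^sub>F t in at_top. norm (\<phi> t - p) \<le> sqrt (exp (- \<gamma> * t) * (V (\<phi> 0) / lam))"
        using b by (intro eventually_at_top_linorderI[of 0]) auto
      show "((\<lambda>t. sqrt (exp (- \<gamma> * t) * (V (\<phi> 0) / lam))) \<longlongrightarrow> 0) at_top"
        by (rule exp_decay_lim[OF g])
    qed
    thus ?thesis by (simp add: LIM_zero_iff)
  qed
  show ?thesis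
    unfolding asymptotically_stable_def
  proof (intro conjI ls exI[of _ d] d allI impI)
    fix \<phi> assume "is_solution_on F {0..} \<phi>" "dist (\<phi> 0) p < d"
    thus "(\<phi> \<longlongrightarrow> p) at_top" by (rule conv)
  qed
qed

lemma unstable_from_chetaev:
  fixes F :: "state \<Rightarrow> state" and p :: state and W :: "state \<Rightarrow> real"
  assumes Wd: "\<And>u. (W has_derivative DW u) (at u)"
    and up: "\<And>u. W u \<le> Lam * (norm (u - p))\<^sup>2" and Lam: "Lam > 0"
    and inc: "\<And>u. norm (u - p) \<le> r0 \<Longrightarrow> DW u (F u) \<ge> \<gamma> * W u" and r0: "r0 > 0" and g: "\<gamma> > 0"
    and pos: "\<And>d. d > 0 \<Longrightarrow> \<exists>x0. dist x0 p < d \<and> W x0 > 0"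
  shows "\<not> lyapunov_stable F p"
proof
  assume "lyapunov_stable F p"
  then obtain d where d: "d > 0" and dd: "\<And>x0. dist x0 p < d \<Longrightarrow>
        (\<exists>\<phi>. is_solution_on F {0..} \<phi> \<and> \<phi> 0 = x0) \<and>
        (\<forall>T \<phi>. T > 0 \<longrightarrow> is_solution_on F {0..<T} \<phi> \<longrightarrow> \<phi> 0 = x0 \<longrightarrow>
            (\<forall>t\<in>{0..<T}. dist (\<phi> t) p < r0))"
    unfolding lyapunov_stable_def using r0 by blast
  obtain x0 where x0: "dist x0 p < d" "W x0 > 0" using pos[OF d] by blast
  obtain \<phi> where sol: "is_solution_on F {0..} \<phi>" and \<phi>0: "\<phi> 0 = x0" using dd[OF x0(1)] by blast
  have inb: "norm (\<phi> t - p) < r0" if t: "t \<ge> 0" for t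
  proof -
    have "is_solution_on F {0..<t+1} \<phi>"
      unfolding is_solution_on_def
    proof
      fix s assume s: "s \<in> {0..<t+1}"
      hence "s \<in> {0..}" by simp
      with sol have "(\<phi> has_vector_derivative F (\<phi> s)) (at s within {0..})"
        by (simp add: is_solution_on_def)
      thus "(\<phi> has_vector_derivative F (\<phi> s)) (at s within {0..<t+1})"
        by (rule has_vector_derivative_within_subset) auto
    qed
    moreover have A: "\<forall>T \<phi>'. T > 0 \<longrightarrow> is_solution_on F {0..<T} \<phi>' \<longrightarrow> \<phi>' 0 = x0 \<longrightarrow>
            (\<forall>t\<in>{0..<T}. dist (\<phi>' t) p < r0)" using dd[OF x0(1)] by blast
    ultimately have "\<forall>t'\<in>{0..<t+1}. dist (\<phi> t') p < r0" using \<phi>0 t A[rule_format, of "t+1" \<phi>] by simp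
    thus ?thesis using t by (auto simp: dist_norm)
  qed
  define t where "t = Lam * r0\<^sup>2 / (\<gamma> * W x0)"
  have t0: "t \<ge> 0" using Lam g x0 by (simp add: t_def)
  have "- W (\<phi> t) \<le> exp (- (- \<gamma>) * t) * (- W (\<phi> 0))"
  proof (rule exp_compare[OF t0])
    fix s assume s: "s \<in> {0..t}"
    have "(\<phi> has_vector_derivative F (\<phi> s)) (at s within {0..t})"
      using sol s unfolding is_solution_on_def
      by (auto intro: has_vector_derivative_within_subset)
    from sol_comp_deriv[OF this Wd]
    show "((\<lambda>s. - W (\<phi> s)) has_real_derivative - DW (\<phi> s) (F (\<phi> s))) (at s within {0..t})"
      by (rule DERIV_minus)
    show "- DW (\<phi> s) (F (\<phi> s)) \<le> - (- \<gamma>) * - W (\<phi> s)"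
      using inc[of "\<phi> s"] inb[of s] s by auto
  qed
  hence ge: "W (\<phi> t) \<ge> exp (\<gamma> * t) * W x0" using \<phi>0 by simp
  have "exp (\<gamma> * t) * W x0 \<ge> (1 + \<gamma> * t) * W x0"
    using x0(2) exp_ge_add_one_self[of "\<gamma> * t"] by (intro mult_right_mono) auto
  also have "(1 + \<gamma> * t) * W x0 = W x0 + Lam * r0\<^sup>2" using g x0(2) by (simp add: t_def field_simps)
  finally have "W (\<phi> t) \<ge> W x0 + Lam * r0\<^sup>2" using ge by linarith
  moreover have "W (\<phi> t) \<le> Lam * r0\<^sup>2"
  proof -
    have "(norm (\<phi> t - p))\<^sup>2 \<le> r0\<^sup>2" using inb[OF t0] by (simp add: power_mono less_imp_le)
    hence "Lam * (norm (\<phi> t - p))\<^sup>2 \<le> Lam * r0\<^sup>2" using Lam by (intro mult_left_mono) auto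
    thus ?thesis using up[of "\<phi> t"] by linarith
  qed
  ultimately show False using x0(2) by linarith
qed

lemma lip_prod:
  fixes f1 f2 g1 g2 A Bc M1 M2 d :: real
  assumes "\<bar>f1 - f2\<bar> \<le> A * d" "\<bar>g1 - g2\<bar> \<le> Bc * d" "\<bar>f2\<bar> \<le> M1" "\<bar>g1\<bar> \<le> M2"
  shows "\<bar>f1 * g1 - f2 * g2\<bar> \<le> (A * M2 + M1 * Bc) * d"
proof -
  have "f1 * g1 - f2 * g2 = (f1 - f2) * g1 + f2 * (g1 - g2)" by (simp add: algebra_simps)
  moreover have "\<bar>(f1 - f2) * g1 + f2 * (g1 - g2)\<bar> \<le> \<bar>(f1 - f2) * g1\<bar> + \<bar>f2 * (g1 - g2)\<bar>"
    by (rule abs_triangle_ineq)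
  ultimately have "\<bar>f1 * g1 - f2 * g2\<bar> \<le> \<bar>f1 - f2\<bar> * \<bar>g1\<bar> + \<bar>f2\<bar> * \<bar>g1 - g2\<bar>"
    by (simp add: abs_mult)
  also have "\<dots> \<le> (A * d) * M2 + M1 * (Bc * d)"
    using assms by (intro add_mono mult_mono) auto
  finally show ?thesis by (simp add: algebra_simps)
qed

lemma nfst: "norm (fst x) \<le> norm x"
  unfolding norm_prod_def by (rule real_le_rsqrt) simp

lemma nsnd: "norm (snd x) \<le> norm x"
  unfolding norm_prod_def by (rule real_le_rsqrt) simp

lemma sin_lip: "\<bar>sin a - sin b\<bar> \<le> \<bar>a - b\<bar>" for a b :: real
proof -
  have "\<bar>sin a - sin b\<bar> = 2 * \<bar>sin ((a - b) / 2)\<bar> * \<bar>cos ((a + b) / 2)\<bar>"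
    by (simp add: sin_diff_sin abs_mult)
  also have "\<dots> \<le> 2 * \<bar>(a - b) / 2\<bar> * 1"
    by (rule mult_mono[OF mult_left_mono[OF abs_sin_x_le_abs_x] abs_cos_le_one]) auto
  also have "2 * \<bar>(a - b) / 2\<bar> * 1 = \<bar>a - b\<bar>" by simp
  finally show ?thesis .
qed

lemma cos_lip: "\<bar>cos a - cos b\<bar> \<le> \<bar>a - b\<bar>" for a b :: real
proof -
  have "\<bar>cos a - cos b\<bar> = 2 * \<bar>sin ((a + b) / 2)\<bar> * \<bar>sin ((b - a) / 2)\<bar>"
    by (simp add: cos_diff_cos abs_mult)
  also have "\<dots> \<le> 2 * 1 * \<bar>(b - a) / 2\<bar>"
    by (rule mult_mono[OF mult_left_mono[OF abs_sin_le_one] abs_sin_x_le_abs_x]) auto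
  also have "2 * 1 * \<bar>(b - a) / 2\<bar> = \<bar>a - b\<bar>" by simp
  finally show ?thesis .
qed

lemma clamp_lip: "\<bar>max (-Z) (min Z a) - max (-Z) (min Z b)\<bar> \<le> \<bar>a - b\<bar>" for Z a b :: real
  by (simp add: max_def min_def abs_if)

lemma clamp_bound: "Z \<ge> 0 \<Longrightarrow> \<bar>max (-Z) (min Z a)\<bar> \<le> Z" for Z a :: real
  by (simp add: max_def min_def abs_if)

definition clampF :: "real \<Rightarrow> real \<Rightarrow> real \<Rightarrow> real \<Rightarrow> real \<Rightarrow> real \<Rightarrow> state \<Rightarrow> state" where
  "clampF \<alpha> \<beta> \<epsilon> \<rho> \<kappa> Z u = governor_field \<alpha> \<beta> \<epsilon> \<rho> \<kappa> (fst u, fst (snd u), max (-Z) (min Z (snd (snd u))))"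

lemma clampF_eq: "\<bar>snd (snd u)\<bar> \<le> Z \<Longrightarrow> clampF \<alpha> \<beta> \<epsilon> \<rho> \<kappa> Z u = governor_field \<alpha> \<beta> \<epsilon> \<rho> \<kappa> u"
proof -
  assume a: "\<bar>snd (snd u)\<bar> \<le> Z"
  have "max (-Z) (min Z (snd (snd u))) = snd (snd u)" using a by (auto simp: abs_le_iff max_def min_def)
  thus ?thesis by (simp add: clampF_def)
qed

lemma clampF_lip:
  assumes Z: "Z \<ge> 0" and rh: "\<rho> \<ge> 0" and k0: "\<kappa> \<ge> 0" and al: "\<alpha> \<ge> 0" and ep: "\<epsilon> \<ge> 0"
  shows "\<exists>L\<ge>0. \<forall>u v. norm (clampF \<alpha> \<beta> \<epsilon> \<rho> \<kappa> Z u - clampF \<alpha> \<beta> \<epsilon> \<rho> \<kappa> Z v) \<le> L * norm (u - v)"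
proof -
  define L2 where "L2 = \<rho> * (2*Z + Z\<^sup>2) + (2*Z + 2*(Z\<^sup>2 + \<kappa>)) + 1 + \<epsilon>"
  have L2: "L2 \<ge> 0" using Z rh k0 ep by (simp add: L2_def)
  have main: "norm (clampF \<alpha> \<beta> \<epsilon> \<rho> \<kappa> Z u - clampF \<alpha> \<beta> \<epsilon> \<rho> \<kappa> Z v) \<le> (1 + L2 + \<alpha>) * norm (u - v)" for u v
  proof -
    obtain x1 y1 z1 where u: "u = (x1, y1, z1)" by (cases u) auto
    obtain x2 y2 z2 where v: "v = (x2, y2, z2)" by (cases v) auto
    define d where "d = norm (u - v)"
    define w1 where "w1 = max (-Z) (min Z z1)"
    define w2 where "w2 = max (-Z) (min Z z2)"
    have n1: "norm (fst (u - v)) \<le> norm (u - v)" by (rule nfst)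
    have n2: "norm (snd (u - v)) \<le> norm (u - v)" by (rule nsnd)
    have n3: "norm (fst (snd (u - v))) \<le> norm (snd (u - v))" by (rule nfst)
    have n4: "norm (snd (snd (u - v))) \<le> norm (snd (u - v))" by (rule nsnd)
    have hx: "\<bar>x1 - x2\<bar> \<le> d" using n1 unfolding d_def by (simp add: u v)
    have hy: "\<bar>y1 - y2\<bar> \<le> d" using n2 n3 unfolding d_def by (simp add: u v)
    have hz: "\<bar>z1 - z2\<bar> \<le> d" using n2 n4 unfolding d_def by (simp add: u v)
    have hw: "\<bar>w1 - w2\<bar> \<le> 1 * d" using clamp_lip[of Z z1 z2] hz by (simp add: w1_def w2_def)
    have bw1: "\<bar>w1\<bar> \<le> Z" and bw2: "\<bar>w2\<bar> \<le> Z" using clamp_bound[OF Z] by (auto simp: w1_def w2_def)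
    have hsq: "\<bar>w1 * w1 - w2 * w2\<bar> \<le> (1 * Z + Z * 1) * d" by (rule lip_prod[OF hw hw bw2 bw1])
    have hsq': "\<bar>w1\<^sup>2 - w2\<^sup>2\<bar> \<le> (2 * Z) * d" using hsq by (simp add: power2_eq_square)
    have "\<bar>w2\<bar>\<^sup>2 \<le> Z\<^sup>2" using bw2 by (intro power_mono) auto
    hence bsq2: "\<bar>w2\<^sup>2\<bar> \<le> Z\<^sup>2" by simp
    have hc: "\<bar>cos x1 - cos x2\<bar> \<le> 1 * d" using cos_lip[of x1 x2] hx by simp
    have hs: "\<bar>sin x1 - sin x2\<bar> \<le> 1 * d" using sin_lip[of x1 x2] hx by simp
    have bc1: "\<bar>cos x1\<bar> \<le> 1" and bs2: "\<bar>sin x2\<bar> \<le> 1" and bs1: "\<bar>sin x1\<bar> \<le> 1" by simp_all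
    have hA: "\<bar>w1\<^sup>2 * cos x1 - w2\<^sup>2 * cos x2\<bar> \<le> (2 * Z * 1 + Z\<^sup>2 * 1) * d"
      by (rule lip_prod[OF hsq' hc bsq2 bc1])
    have hsc: "\<bar>sin x1 * cos x1 - sin x2 * cos x2\<bar> \<le> (1 * 1 + 1 * 1) * d"
      by (rule lip_prod[OF hs hc bs2 bc1])
    have hk: "\<bar>(w1\<^sup>2 + \<kappa>) - (w2\<^sup>2 + \<kappa>)\<bar> \<le> (2 * Z) * d" using hsq' by simp
    have bk: "\<bar>w2\<^sup>2 + \<kappa>\<bar> \<le> Z\<^sup>2 + \<kappa>" using bsq2 k0 by simp
    have bsc: "\<bar>sin x1 * cos x1\<bar> \<le> 1" by (simp add: abs_mult mult_le_one)
    have hB: "\<bar>(w1\<^sup>2 + \<kappa>) * (sin x1 * cos x1) - (w2\<^sup>2 + \<kappa>) * (sin x2 * cos x2)\<bar>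
        \<le> (2 * Z * 1 + (Z\<^sup>2 + \<kappa>) * (1 * 1 + 1 * 1)) * d"
      by (rule lip_prod[OF hk hsc bk bsc])
    define D2 where "D2 = \<rho> * (w1\<^sup>2 * cos x1 - w2\<^sup>2 * cos x2)
       + ((w1\<^sup>2 + \<kappa>) * (sin x1 * cos x1) - (w2\<^sup>2 + \<kappa>) * (sin x2 * cos x2))
       - (sin x1 - sin x2) - \<epsilon> * (y1 - y2)"
    define A1 where "A1 = w1\<^sup>2 * cos x1 - w2\<^sup>2 * cos x2"
    define B1 where "B1 = (w1\<^sup>2 + \<kappa>) * (sin x1 * cos x1) - (w2\<^sup>2 + \<kappa>) * (sin x2 * cos x2)"
    define S1 where "S1 = sin x1 - sin x2"
    define Y1 where "Y1 = y1 - y2"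
    have e1a: "\<rho> * A1 \<le> \<rho> * \<bar>A1\<bar>" by (rule mult_left_mono[OF abs_ge_self rh])
    have "\<rho> * (- A1) \<le> \<rho> * \<bar>A1\<bar>" by (rule mult_left_mono[OF abs_ge_minus_self rh])
    hence e1b: "- (\<rho> * A1) \<le> \<rho> * \<bar>A1\<bar>" by simp
    have e2a: "\<epsilon> * Y1 \<le> \<epsilon> * \<bar>Y1\<bar>" by (rule mult_left_mono[OF abs_ge_self ep])
    have "\<epsilon> * (- Y1) \<le> \<epsilon> * \<bar>Y1\<bar>" by (rule mult_left_mono[OF abs_ge_minus_self ep])
    hence e2b: "- (\<epsilon> * Y1) \<le> \<epsilon> * \<bar>Y1\<bar>" by simp
    note e1 = e1a e1b and e2 = e2a e2b
    have e3: "\<rho> * \<bar>A1\<bar> \<le> \<rho> * ((2 * Z * 1 + Z\<^sup>2 * 1) * d)" using hA rh by (simp add: A1_def mult_left_mono)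
    have e4: "\<epsilon> * \<bar>Y1\<bar> \<le> \<epsilon> * d" using hy ep by (simp add: Y1_def mult_left_mono)
    have "D2 = \<rho> * A1 + B1 - S1 - \<epsilon> * Y1" by (simp add: D2_def A1_def B1_def S1_def Y1_def)
    hence "\<bar>D2\<bar> \<le> \<rho> * ((2 * Z * 1 + Z\<^sup>2 * 1) * d) + (2 * Z * 1 + (Z\<^sup>2 + \<kappa>) * (1 * 1 + 1 * 1)) * d + 1 * d + \<epsilon> * d"
      using e1 e2 e3 e4 hB hs abs_ge_self[of B1] abs_ge_minus_self[of B1] abs_ge_self[of S1] abs_ge_minus_self[of S1]
      unfolding abs_le_iff B1_def[symmetric] S1_def[symmetric] by linarith
    also have "\<dots> = L2 * d" by (simp add: L2_def algebra_simps)
    finally have hD2: "\<bar>D2\<bar> \<le> L2 * d" .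
    have h3: "\<bar>\<alpha> * (cos x1 - \<beta>) - \<alpha> * (cos x2 - \<beta>)\<bar> \<le> \<alpha> * d"
    proof -
      have "\<bar>\<alpha> * (cos x1 - \<beta>) - \<alpha> * (cos x2 - \<beta>)\<bar> = \<alpha> * \<bar>cos x1 - cos x2\<bar>"
      proof -
        have "\<alpha> * (cos x1 - \<beta>) - \<alpha> * (cos x2 - \<beta>) = \<alpha> * (cos x1 - cos x2)" by (simp add: algebra_simps)
        thus ?thesis using al by (simp add: abs_mult)
      qed
      thus ?thesis using hc al by (simp add: mult_left_mono)
    qed
    have eqd: "clampF \<alpha> \<beta> \<epsilon> \<rho> \<kappa> Z u - clampF \<alpha> \<beta> \<epsilon> \<rho> \<kappa> Z v
        = (y1 - y2, D2, \<alpha> * (cos x1 - \<beta>) - \<alpha> * (cos x2 - \<beta>))"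
      by (simp add: clampF_def governor_field_def u v D2_def w1_def w2_def algebra_simps)
    have "norm (y1 - y2, D2, \<alpha> * (cos x1 - \<beta>) - \<alpha> * (cos x2 - \<beta>))
        \<le> \<bar>y1 - y2\<bar> + (\<bar>D2\<bar> + \<bar>\<alpha> * (cos x1 - \<beta>) - \<alpha> * (cos x2 - \<beta>)\<bar>)"
      using norm_Pair_le[of "y1 - y2" "(D2, \<alpha> * (cos x1 - \<beta>) - \<alpha> * (cos x2 - \<beta>))"]
        norm_Pair_le[of D2 "\<alpha> * (cos x1 - \<beta>) - \<alpha> * (cos x2 - \<beta>)"] by simp
    also have "\<dots> \<le> d + (L2 * d + \<alpha> * d)" using hy hD2 h3 by linarith
    finally show ?thesis unfolding eqd d_def by (simp add: algebra_simps)
  qed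
  thus ?thesis using L2 al by (intro exI[of _ "1 + L2 + \<alpha>"]) auto
qed

lemma powr_facts:
  fixes x :: real assumes "x > 0"
  shows "(x powr (1/4))\<^sup>2 = sqrt x" "x powr (3/2) = x * sqrt x" "x powr (3/4) = sqrt x * x powr (1/4)"
proof -
  have "(x powr (1/4))\<^sup>2 = x powr (1/4 + 1/4)" by (simp add: power2_eq_square powr_add[symmetric])
  also have "\<dots> = sqrt x" using assms by (simp add: powr_half_sqrt)
  finally show "(x powr (1/4))\<^sup>2 = sqrt x" .
  have "x powr (3/2) = x powr 1 * x powr (1/2)" using powr_add[of x 1 "1/2"] by simp
  also have "\<dots> = x * sqrt x" using assms by (simp add: powr_half_sqrt)
  finally show "x powr (3/2) = x * sqrt x" .
  have "x powr (3/4) = x powr (1/2) * x powr (1/4)" using powr_add[of x "1/2" "1/4"] by simp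
  also have "\<dots> = sqrt x * x powr (1/4)" using assms by (simp add: powr_half_sqrt)
  finally show "x powr (3/4) = sqrt x * x powr (1/4)" .
qed

context
  fixes \<alpha> \<beta> \<epsilon> \<rho> \<kappa> :: real
  assumes b0: "0 < \<beta>" and b1: "\<beta> < 1" and al: "\<alpha> > 0" and ep: "\<epsilon> > 0" and rh: "\<rho> \<ge> 0"
    and k0: "0 \<le> \<kappa>" and k1: "\<kappa> < 1"
begin

definition "sS = sqrt (1 - \<beta>\<^sup>2)"
definition "zz = snd (snd (governor_P0 \<beta> \<rho> \<kappa>))"
definition "aco = \<rho> * zz\<^sup>2 * sS - (zz\<^sup>2 + \<kappa>) * (\<beta>\<^sup>2 - sS\<^sup>2) + \<beta>"
definition "Bco = 2 * zz * \<beta> * (\<rho> + sS)"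
definition "kco = \<alpha> * sS"

lemma sS_pos: "sS > 0" and sS_sq: "sS\<^sup>2 = 1 - \<beta>\<^sup>2"
proof -
  have "\<beta>*\<beta> < 1" using mult_strict_mono[OF b1 b1] b0 by simp
  hence "\<beta>\<^sup>2 < 1" by (simp add: power2_eq_square)
  thus "sS > 0" "sS\<^sup>2 = 1 - \<beta>\<^sup>2" by (auto simp: sS_def)
qed

lemma P0_eq: "governor_P0 \<beta> \<rho> \<kappa> = (arccos \<beta>, 0, zz)"
  by (simp add: governor_P0_def zz_def)

lemma cos_x0: "cos (arccos \<beta>) = \<beta>" using b0 b1 by simp
lemma sin_x0: "sin (arccos \<beta>) = sS" using b0 b1 by (simp add: sin_arccos sS_def)

lemma zz_pos: "zz > 0" and zz_sq: "zz\<^sup>2 * \<beta> * (\<rho> + sS) = sS * (1 - \<kappa> * \<beta>)"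
proof -
  have "\<kappa> * \<beta> < 1 * \<beta>" using k1 b0 by (rule mult_strict_right_mono)
  hence kb: "\<kappa> * \<beta> < 1" using b1 by simp
  have rs: "\<rho> + sS > 0" using rh sS_pos by simp
  have pb: "1 - \<beta>\<^sup>2 > 0" using sS_sq sS_pos by (metis zero_less_power2 less_irrefl)
  have z: "zz = sqrt (1 - \<kappa> * \<beta>) * (1 - \<beta>\<^sup>2) powr (1/4) / (sqrt \<beta> * sqrt (\<rho> + sS))"
    by (simp add: zz_def governor_P0_def sS_def)
  show "zz > 0" unfolding z using kb rs pb b0 by (auto intro!: divide_pos_pos mult_pos_pos)
  have h: "zz\<^sup>2 = (1 - \<kappa> * \<beta>) * sS / (\<beta> * (\<rho> + sS))"
    unfolding z using kb rs pb b0
    by (simp add: power_divide power_mult_distrib powr_facts(1)[OF pb] sS_def)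
  have dn: "\<beta> * (\<rho> + sS) \<noteq> 0" using rs b0 by simp
  have "zz\<^sup>2 * (\<beta> * (\<rho> + sS)) = (1 - \<kappa> * \<beta>) * sS / (\<beta> * (\<rho> + sS)) * (\<beta> * (\<rho> + sS))"
    using h by simp
  also have "\<dots> = (1 - \<kappa> * \<beta>) * sS" using dn by simp
  finally show "zz\<^sup>2 * \<beta> * (\<rho> + sS) = sS * (1 - \<kappa> * \<beta>)" by (simp add: algebra_simps)
qed

lemma F_eq: "governor_field \<alpha> \<beta> \<epsilon> \<rho> \<kappa> = (\<lambda>u. (fst (snd u),
   \<rho> * (snd (snd u))\<^sup>2 * cos (fst u) + ((snd (snd u))\<^sup>2 + \<kappa>) * sin (fst u) * cos (fst u) - sin (fst u) - \<epsilon> * fst (snd u),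
   \<alpha> * (cos (fst u) - \<beta>)))"
  by (auto simp: governor_field_def fun_eq_iff)

lemma F_P0: "governor_field \<alpha> \<beta> \<epsilon> \<rho> \<kappa> (governor_P0 \<beta> \<rho> \<kappa>) = 0"
proof -
  have "\<rho> * zz\<^sup>2 * \<beta> + (zz\<^sup>2 + \<kappa>) * sS * \<beta> - sS = 0"
    using zz_sq by (simp add: algebra_simps)
  thus ?thesis by (simp add: F_eq P0_eq cos_x0 sin_x0 zero_prod_def mult.commute mult.left_commute)
qed

lemma F_deriv: "(governor_field \<alpha> \<beta> \<epsilon> \<rho> \<kappa> has_derivative Dl aco \<epsilon> Bco kco) (at (governor_P0 \<beta> \<rho> \<kappa>))"
  unfolding F_eq P0_eq
  apply (rule has_derivative_eq_rhs)
   apply (rule derivative_eq_intros | simp)+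
  apply (rule ext)
  apply (simp add: Dl_def aco_def Bco_def kco_def cos_x0 sin_x0)
  apply (simp add: algebra_simps power2_eq_square)
  done

lemma aco_eq: "aco * sS * \<beta> = \<rho> * zz\<^sup>2 * \<beta>^3 + sS^3"
proof -
  have eq: "(zz\<^sup>2 + \<kappa>) * sS * \<beta> = sS - \<rho> * zz\<^sup>2 * \<beta>" using zz_sq by (simp add: algebra_simps)
  have "aco * sS * \<beta> = \<rho> * zz\<^sup>2 * sS\<^sup>2 * \<beta> - ((zz\<^sup>2 + \<kappa>) * sS * \<beta>) * (\<beta>\<^sup>2 - sS\<^sup>2) + sS * \<beta>\<^sup>2"
    by (simp add: aco_def algebra_simps power2_eq_square)
  also have "\<dots> = \<rho> * zz\<^sup>2 * \<beta>^3 + sS^3"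
  proof -
    have s3: "sS^3 = sS * (1 - \<beta>\<^sup>2)" using sS_sq by (simp add: power3_eq_cube power2_eq_square)
    show ?thesis unfolding eq sS_sq s3 by (simp add: algebra_simps power2_eq_square power3_eq_cube)
  qed
  finally show ?thesis .
qed

lemma aco_pos: "aco > 0"
proof -
  have "\<rho> * zz\<^sup>2 * \<beta>^3 + sS^3 > 0" using rh b0 sS_pos
    by (intro add_nonneg_pos) auto
  hence "aco * (sS * \<beta>) > 0" using aco_eq by (simp add: mult.assoc)
  moreover have "sS * \<beta> > 0" using sS_pos b0 by simp
  ultimately show ?thesis by (simp add: zero_less_mult_iff)
qed

lemma epsc_eq: "governor_eps_c \<alpha> \<beta> \<rho> \<kappa> = kco * Bco / aco"
proof -
  define Nc where "Nc = \<rho> * (1 - \<kappa> * \<beta>^3) + sS^3"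
  define q where "q = sqrt (1 - \<kappa> * \<beta>)"
  define r4 where "r4 = (1 - \<beta>\<^sup>2) powr (1/4)"
  define sb where "sb = sqrt \<beta>"
  define sr where "sr = sqrt (\<rho> + sS)"
  have rs: "\<rho> + sS > 0" using rh sS_pos by simp
  have pb: "1 - \<beta>\<^sup>2 > 0" using sS_sq sS_pos by (metis zero_less_power2 less_irrefl)
  have sb2: "sb * sb = \<beta>" using b0 by (simp add: sb_def)
  have sr2: "sr * sr = \<rho> + sS" using rs by (simp add: sr_def)
  have sbp: "sb > 0" using b0 by (simp add: sb_def)
  have srp: "sr > 0" using rs by (simp add: sr_def)
  have qr: "q * r4 = zz * sb * sr"
    using sbp srp by (simp add: zz_def governor_P0_def q_def r4_def sb_def sr_def sS_def)
  have s3: "sS^3 = sS * (1 - \<beta>\<^sup>2)" using sS_sq by (simp add: power3_eq_cube power2_eq_square)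
  have den: "(1 - \<beta>\<^sup>2) powr (3/2) + \<rho> * (1 - \<kappa> * \<beta>^3) = Nc"
    using powr_facts(2)[OF pb] s3 by (simp add: Nc_def sS_def[symmetric] mult.commute)
  have num: "2 * \<alpha> * \<beta> powr (3/2) * (1 - \<beta>\<^sup>2) powr (3/4) * sqrt (1 - \<kappa> * \<beta>)
        * (\<rho> + sqrt (1 - \<beta>\<^sup>2)) powr (3/2) = 2 * \<alpha> * (\<beta> * sb) * (sS * r4) * q * ((\<rho> + sS) * sr)"
    using powr_facts(2)[OF b0] powr_facts(3)[OF pb] powr_facts(2)[OF rs]
    by (simp add: sb_def sr_def q_def r4_def sS_def)
  have "2 * \<alpha> * (\<beta> * sb) * (sS * r4) * q * ((\<rho> + sS) * sr)
      = 2 * \<alpha> * \<beta> * sS * (\<rho> + sS) * sb * sr * (q * r4)" by (simp add: algebra_simps)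
  also have "\<dots> = 2 * \<alpha> * \<beta> * sS * (\<rho> + sS) * zz * (sb * sb) * (sr * sr)"
    unfolding qr by (simp add: algebra_simps)
  also have "\<dots> = kco * Bco * ((\<rho> + sS) * \<beta>)"
    unfolding sb2 sr2 by (simp add: kco_def Bco_def algebra_simps)
  finally have numeq: "2 * \<alpha> * (\<beta> * sb) * (sS * r4) * q * ((\<rho> + sS) * sr) = kco * Bco * ((\<rho> + sS) * \<beta>)" .
  have A: "aco * ((\<rho> + sS) * \<beta>) = Nc"
  proof -
    have "sS * (aco * ((\<rho> + sS) * \<beta>)) = (aco * sS * \<beta>) * (\<rho> + sS)" by (simp add: algebra_simps)
    also have "\<dots> = \<rho> * \<beta>\<^sup>2 * (zz\<^sup>2 * \<beta> * (\<rho> + sS)) + sS^3 * (\<rho> + sS)"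
      unfolding aco_eq by (simp add: algebra_simps power2_eq_square power3_eq_cube)
    also have "\<dots> = sS * Nc" unfolding zz_sq s3 Nc_def
      using sS_sq by (simp add: algebra_simps power2_eq_square power3_eq_cube)
    finally show ?thesis using sS_pos by simp
  qed
  have Ncp: "Nc > 0" using A[symmetric] aco_pos rs b0 by simp
  have "governor_eps_c \<alpha> \<beta> \<rho> \<kappa> = kco * Bco * ((\<rho> + sS) * \<beta>) / Nc"
    unfolding governor_eps_c_def den num numeq ..
  also have "\<dots> = kco * Bco / aco" unfolding A[symmetric] using aco_pos rs b0 by simp
  finally show ?thesis .
qed

abbreviation "FF \<equiv> governor_field \<alpha> \<beta> \<epsilon> \<rho> \<kappa>"
abbreviation "pp \<equiv> governor_P0 \<beta> \<rho> \<kappa>"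

lemma Bco_pos: "Bco > 0"
  using zz_pos b0 rh sS_pos by (simp add: Bco_def)

lemma kco_pos: "kco > 0"
  using al sS_pos by (simp add: kco_def)

lemma remainder:
  assumes "\<eta> > 0"
  shows "\<exists>r>0. \<forall>u. norm (u - pp) < r \<longrightarrow> norm (FF u - Dl aco \<epsilon> Bco kco (u - pp)) \<le> \<eta> * norm (u - pp)"
  using F_deriv assms unfolding has_derivative_at_alt by (simp add: F_P0)

lemma LB_pos:
  fixes a e B c \<delta> A :: real
  assumes "a > 0" "e > 0" "B > 0" "c > 0" "\<delta> > 0" "A > 0" "v \<noteq> 0"
  shows "\<delta>*c/2 * (fst v)\<^sup>2 + \<delta>/e * (B * snd (snd v) - a * fst v - e * fst (snd v))\<^sup>2 + A/2 * (fst (snd v))\<^sup>2 > 0"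
proof (rule ccontr)
  obtain X Y W where v: "v = (X, Y, W)" by (cases v) auto
  assume "\<not> ?thesis"
  hence le: "\<delta>*c/2 * X\<^sup>2 + \<delta>/e * (B * W - a * X - e * Y)\<^sup>2 + A/2 * Y\<^sup>2 \<le> 0" by (simp add: v)
  have t1: "\<delta>*c/2 * X\<^sup>2 \<ge> 0" and t2: "\<delta>/e * (B * W - a * X - e * Y)\<^sup>2 \<ge> 0" and t3: "A/2 * Y\<^sup>2 \<ge> 0"
    using assms by simp_all
  have "\<delta>*c/2 * X\<^sup>2 = 0" "A/2 * Y\<^sup>2 = 0" "\<delta>/e * (B * W - a * X - e * Y)\<^sup>2 = 0" using le t1 t2 t3 by linarith+
  hence "X = 0" "Y = 0" "B * W - a * X - e * Y = 0" using assms by simp_all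
  hence "W = 0" using assms by simp
  thus False using \<open>X = 0\<close> \<open>Y = 0\<close> assms(7) v by (simp add: zero_prod_def)
qed

lemma core:
  assumes sg: "\<sigma> = 1 \<or> \<sigma> = -1" and sD: "\<sigma> * (\<epsilon>*aco - kco*Bco) > 0"
  shows "\<exists>\<delta>>0. \<delta>\<^sup>2 \<le> \<epsilon>*(kco*Bco)/8 \<and> \<delta>\<^sup>2 \<le> \<sigma>*(\<epsilon>*aco - kco*Bco)*\<epsilon>/32 \<and>
    (\<exists>Lam>0. \<forall>v. qQ aco \<epsilon> Bco kco (\<sigma>*\<delta>) v \<le> Lam * (norm v)\<^sup>2) \<and>
    (\<exists>\<gamma>>0. \<exists>r0>0. \<forall>u. norm (u - pp) \<le> r0 \<longrightarrow>
        - \<sigma> * inner (gradQ aco \<epsilon> Bco kco (\<sigma>*\<delta>) (u - pp)) (FF u) \<ge> \<gamma> * qQ aco \<epsilon> Bco kco (\<sigma>*\<delta>) (u - pp))"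
proof -
  define a where "a = aco"
  define e where "e = \<epsilon>"
  define B where "B = Bco"
  define k where "k = kco"
  define c where "c = k * B"
  define D where "D = e*a - c"
  define A where "A = \<sigma> * D"
  have a: "a > 0" using aco_pos by (simp add: a_def)
  have e: "e > 0" using ep by (simp add: e_def)
  have B: "B > 0" using Bco_pos by (simp add: B_def)
  have k: "k > 0" using kco_pos by (simp add: k_def)
  have c: "c > 0" using k B by (simp add: c_def)
  have A: "A > 0" using sD by (simp add: A_def D_def c_def a_def e_def k_def B_def)
  define T where "T = e + a/e + D\<^sup>2/(2*c*e\<^sup>2)"
  have T: "T > 0" using e a c by (simp add: T_def add_pos_nonneg)
  define \<delta> where "\<delta> = min (A/(2*T)) (min (sqrt (e*c/8)) (sqrt (A*e/32)))"
  have d: "\<delta> > 0" using A T e c by (simp add: \<delta>_def)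
  have d1: "\<delta>\<^sup>2 \<le> e*c/8"
  proof -
    have "\<delta> \<le> sqrt (e*c/8)" by (simp add: \<delta>_def)
    hence "\<delta>\<^sup>2 \<le> (sqrt (e*c/8))\<^sup>2" using d by (intro power_mono) auto
    thus ?thesis using e c by simp
  qed
  have d2: "\<delta>\<^sup>2 \<le> A*e/32"
  proof -
    have "\<delta> \<le> sqrt (A*e/32)" by (simp add: \<delta>_def)
    hence "\<delta>\<^sup>2 \<le> (sqrt (A*e/32))\<^sup>2" using d by (intro power_mono) auto
    thus ?thesis using e A by simp
  qed
  have hd: "\<delta> * T \<le> A/2"
  proof -
    have "\<delta> \<le> A/(2*T)" by (simp add: \<delta>_def)
    hence "\<delta> * T \<le> A/(2*T) * T" using T by (intro mult_right_mono) auto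
    thus ?thesis using T by simp
  qed
  define Q where "Q = qQ a e B k (\<sigma>*\<delta>)"
  define G where "G = gradQ a e B k (\<sigma>*\<delta>)"
  obtain Lam where Lam: "Lam > 0" "\<And>v. Q v \<le> Lam * (norm v)\<^sup>2"
    using qf_upper[OF qQ_cont qQ_hom, of a e B k "\<sigma>*\<delta>"] unfolding Q_def by blast
  define LB where "LB v = \<delta>*c/2 * (fst v)\<^sup>2 + \<delta>/e * (B * snd (snd v) - a * fst v - e * fst (snd v))\<^sup>2 + A/2 * (fst (snd v))\<^sup>2" for v :: state
  have "\<exists>l>0. \<forall>u. l * (norm u)\<^sup>2 \<le> LB u"
  proof (rule qf_lower)
    show "continuous_on UNIV LB" unfolding LB_def by (intro continuous_intros)
    show "LB (t *\<^sub>R u) = t\<^sup>2 * LB u" for t u unfolding LB_def by (simp add: algebra_simps power2_eq_square)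
    show "u \<noteq> 0 \<Longrightarrow> LB u > 0" for u unfolding LB_def by (rule LB_pos[OF a e B c d A])
  qed
  then obtain \<mu> where mu: "\<mu> > 0" "\<And>u. \<mu> * (norm u)\<^sup>2 \<le> LB u" by blast
  have lin: "- \<sigma> * inner (G v) (Dl a e B k v) \<ge> \<mu> * (norm v)\<^sup>2" for v
  proof -
    obtain X Y W where v: "v = (X, Y, W)" by (cases v) auto
    have hd': "\<delta> * (e + a/e + (e*a - k*B)\<^sup>2/(2*(k*B)*e\<^sup>2)) \<le> \<sigma> * (e*a - k*B) / 2"
      using hd by (simp add: T_def A_def D_def c_def)
    have "- \<sigma> * inner (G v) (Dl a e B k v) \<ge> LB v"
      using lin_ineq[OF a e B k sg _ d hd'] A unfolding G_def LB_def v
      by (simp add: A_def D_def c_def)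
    thus ?thesis using mu(2)[of v] by linarith
  qed
  obtain K where K: "K > 0" "\<And>v h. \<bar>inner (G v) h\<bar> \<le> K * norm v * norm h"
    using grad_bound[of a e B k "\<sigma>*\<delta>"] unfolding G_def by blast
  define \<eta> where "\<eta> = \<mu> / (2*K)"
  have eta: "\<eta> > 0" using mu K by (simp add: \<eta>_def)
  obtain r where r: "r > 0" and rem: "\<And>u. norm (u - pp) < r \<Longrightarrow> norm (FF u - Dl a e B k (u - pp)) \<le> \<eta> * norm (u - pp)"
    using remainder[OF eta] unfolding a_def e_def B_def k_def by blast
  define \<gamma> where "\<gamma> = \<mu> / (2 * Lam)"
  have g: "\<gamma> > 0" using mu Lam by (simp add: \<gamma>_def)
  have main: "- \<sigma> * inner (G (u - pp)) (FF u) \<ge> \<gamma> * Q (u - pp)" if u: "norm (u - pp) \<le> r/2" for u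
  proof -
    define v where "v = u - pp"
    define R where "R = FF u - Dl a e B k v"
    have nv: "norm v < r" using u r by (simp add: v_def)
    have Rb: "norm R \<le> \<eta> * norm v" using rem[of u] nv by (simp add: R_def v_def)
    have split: "inner (G v) (FF u) = inner (G v) (Dl a e B k v) + inner (G v) R"
      by (simp add: R_def inner_diff_right)
    have "\<bar>inner (G v) R\<bar> \<le> K * norm v * norm R" by (rule K(2))
    also have "\<dots> \<le> K * norm v * (\<eta> * norm v)" using Rb K(1) by (intro mult_left_mono) auto
    also have "\<dots> = \<mu>/2 * (norm v)\<^sup>2" using K(1) by (simp add: \<eta>_def power2_eq_square field_simps)
    finally have Rin: "\<bar>inner (G v) R\<bar> \<le> \<mu>/2 * (norm v)\<^sup>2" .
    have "- \<sigma> * inner (G v) R \<ge> - \<bar>inner (G v) R\<bar>" using sg by auto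
    hence "- \<sigma> * inner (G v) (FF u) \<ge> \<mu> * (norm v)\<^sup>2 - \<mu>/2 * (norm v)\<^sup>2"
      using lin[of v] Rin split by (simp add: algebra_simps)
    moreover have "\<gamma> * Q v \<le> \<mu>/2 * (norm v)\<^sup>2"
    proof -
      have "\<gamma> * Q v \<le> \<gamma> * (Lam * (norm v)\<^sup>2)" using Lam(2)[of v] g by (intro mult_left_mono) auto
      also have "\<dots> = \<mu>/2 * (norm v)\<^sup>2" using Lam(1) by (simp add: \<gamma>_def)
      finally show ?thesis .
    qed
    ultimately show ?thesis by (simp add: v_def)
  qed
  show ?thesis
  proof (rule exI[of _ \<delta>], intro conjI d)
    show "\<delta>\<^sup>2 \<le> \<epsilon>*(kco*Bco)/8" using d1 by (simp add: e_def c_def k_def B_def)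
    show "\<delta>\<^sup>2 \<le> \<sigma>*(\<epsilon>*aco - kco*Bco)*\<epsilon>/32" using d2 by (simp add: A_def D_def e_def c_def k_def B_def a_def)
    show "\<exists>Lam>0. \<forall>v. qQ aco \<epsilon> Bco kco (\<sigma>*\<delta>) v \<le> Lam * (norm v)\<^sup>2"
      using Lam unfolding Q_def a_def e_def B_def k_def by blast
    show "\<exists>\<gamma>>0. \<exists>r0>0. \<forall>u. norm (u - pp) \<le> r0 \<longrightarrow>
        - \<sigma> * inner (gradQ aco \<epsilon> Bco kco (\<sigma>*\<delta>) (u - pp)) (FF u) \<ge> \<gamma> * qQ aco \<epsilon> Bco kco (\<sigma>*\<delta>) (u - pp)"
      using main g r unfolding G_def Q_def a_def e_def B_def k_def
      by (intro exI[of _ \<gamma>] conjI g exI[of _ "r/2"]) auto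
  qed
qed

lemma Qrhs_pos:
  fixes a e B c D :: real
  assumes "a > 0" "e > 0" "B > 0" "c > 0" "D > 0" "v \<noteq> 0"
  shows "(B * snd (snd v) - a * fst v)\<^sup>2/4 + e*c*(fst v + fst (snd v)/e)\<^sup>2/4 + D/(4*e)*(fst (snd v))\<^sup>2 > 0"
proof (rule ccontr)
  obtain X Y W where v: "v = (X, Y, W)" by (cases v) auto
  assume "\<not> ?thesis"
  hence le: "(B * W - a * X)\<^sup>2/4 + e*c*(X + Y/e)\<^sup>2/4 + D/(4*e)*Y\<^sup>2 \<le> 0" by (simp add: v)
  have t1: "(B * W - a * X)\<^sup>2/4 \<ge> 0" and t2: "e*c*(X + Y/e)\<^sup>2/4 \<ge> 0" and t3: "D/(4*e)*Y\<^sup>2 \<ge> 0"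
    using assms by simp_all
  have "(B * W - a * X)\<^sup>2/4 = 0" "e*c*(X + Y/e)\<^sup>2/4 = 0" "D/(4*e)*Y\<^sup>2 = 0" using le t1 t2 t3 by linarith+
  hence "B * W - a * X = 0" "X + Y/e = 0" "Y = 0" using assms by simp_all
  hence "X = 0" "W = 0" using assms by simp_all
  thus False using \<open>Y = 0\<close> assms(6) v by (simp add: zero_prod_def)
qed

lemma V_deriv: "((\<lambda>u. qQ a e B k m (u - p)) has_derivative (\<lambda>h. inner (gradQ a e B k m (u - p)) h)) (at u)"
proof -
  have "((\<lambda>u. u - p) has_derivative (\<lambda>h. h)) (at u)" by (auto intro!: derivative_eq_intros)
  from has_derivative_compose[OF this qQ_deriv] show ?thesis by simp
qed

lemma ext_clamp:
  assumes r: "0 < r"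
  shows "\<exists>Ft L. L \<ge> 0 \<and> (\<forall>u v. norm (Ft u - Ft v) \<le> L * norm (u - v)) \<and> (\<forall>u. norm (u - pp) \<le> r \<longrightarrow> Ft u = FF u)"
proof -
  have Z: "zz + r \<ge> 0" using zz_pos r by simp
  obtain L where L: "L \<ge> 0" "\<forall>u v. norm (clampF \<alpha> \<beta> \<epsilon> \<rho> \<kappa> (zz + r) u - clampF \<alpha> \<beta> \<epsilon> \<rho> \<kappa> (zz + r) v) \<le> L * norm (u - v)"
    using clampF_lip[OF Z rh k0 less_imp_le[OF al] less_imp_le[OF ep]] by blast
  have "clampF \<alpha> \<beta> \<epsilon> \<rho> \<kappa> (zz + r) u = FF u" if u: "norm (u - pp) \<le> r" for u
  proof (rule clampF_eq)
    have "norm (snd (snd (u - pp))) \<le> norm (u - pp)" using nsnd[of "snd (u - pp)"] nsnd[of "u - pp"] by linarith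
    hence "\<bar>snd (snd u) - zz\<bar> \<le> r" using u by (simp add: P0_eq)
    thus "\<bar>snd (snd u)\<bar> \<le> zz + r" using zz_pos by (auto simp: abs_le_iff)
  qed
  thus ?thesis using L by blast
qed

lemma stable_part:
  assumes D: "\<epsilon>*aco - kco*Bco > 0"
  shows "asymptotically_stable FF pp"
proof -
  obtain \<delta> where d: "\<delta> > 0" and d1: "\<delta>\<^sup>2 \<le> \<epsilon>*(kco*Bco)/8" and d2: "\<delta>\<^sup>2 \<le> 1*(\<epsilon>*aco - kco*Bco)*\<epsilon>/32"
    and LamE: "\<exists>Lam>0. \<forall>v. qQ aco \<epsilon> Bco kco (1*\<delta>) v \<le> Lam * (norm v)\<^sup>2"
    and gE: "\<exists>\<gamma>>0. \<exists>r0>0. \<forall>u. norm (u - pp) \<le> r0 \<longrightarrow>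
        - 1 * inner (gradQ aco \<epsilon> Bco kco (1*\<delta>) (u - pp)) (FF u) \<ge> \<gamma> * qQ aco \<epsilon> Bco kco (1*\<delta>) (u - pp)"
    using core[of 1] D by auto
  obtain Lam where Lam: "Lam > 0" "\<And>v. qQ aco \<epsilon> Bco kco \<delta> v \<le> Lam * (norm v)\<^sup>2" using LamE by auto
  obtain \<gamma> r0 where g: "\<gamma> > 0" and r0: "r0 > 0" and dec0: "\<And>u. norm (u - pp) \<le> r0 \<Longrightarrow>
        inner (gradQ aco \<epsilon> Bco kco \<delta> (u - pp)) (FF u) \<le> - \<gamma> * qQ aco \<epsilon> Bco kco \<delta> (u - pp)"
    using gE by fastforce
  have "\<exists>l>0. \<forall>u. l * (norm u)\<^sup>2 \<le> qQ aco \<epsilon> Bco kco \<delta> u"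
  proof (rule qf_lower[OF qQ_cont qQ_hom])
    fix u :: state assume u: "u \<noteq> 0"
    obtain X Y W where v: "u = (X, Y, W)" by (cases u) auto
    have "qQ aco \<epsilon> Bco kco \<delta> (X,Y,W) \<ge> (Bco*W - aco*X)\<^sup>2/4 + \<epsilon>*(kco*Bco)*(X + Y/\<epsilon>)\<^sup>2/4 + (\<epsilon>*aco - kco*Bco)/(4*\<epsilon>)*Y\<^sup>2"
      using Q_lower[OF aco_pos ep Bco_pos kco_pos D less_imp_le[OF d] d1] d2 by simp
    moreover have "(Bco*W - aco*X)\<^sup>2/4 + \<epsilon>*(kco*Bco)*(X + Y/\<epsilon>)\<^sup>2/4 + (\<epsilon>*aco - kco*Bco)/(4*\<epsilon>)*Y\<^sup>2 > 0"
      using Qrhs_pos[OF aco_pos ep Bco_pos _ D u] kco_pos Bco_pos unfolding v by simp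
    ultimately show "qQ aco \<epsilon> Bco kco \<delta> u > 0" unfolding v by linarith
  qed
  then obtain lam where lam: "lam > 0" "\<And>u. lam * (norm u)\<^sup>2 \<le> qQ aco \<epsilon> Bco kco \<delta> u" by blast
  show ?thesis
  proof (rule stable_from_lyap[where V="\<lambda>u. qQ aco \<epsilon> Bco kco \<delta> (u - pp)"
        and DV="\<lambda>u h. inner (gradQ aco \<epsilon> Bco kco \<delta> (u - pp)) h" and lam=lam and Lam=Lam and \<gamma>=\<gamma>])
    show "\<And>u. ((\<lambda>u. qQ aco \<epsilon> Bco kco \<delta> (u - pp)) has_derivative (\<lambda>h. inner (gradQ aco \<epsilon> Bco kco \<delta> (u - pp)) h)) (at u)"
      by (rule V_deriv)
    show "\<And>u. lam * (norm (u - pp))\<^sup>2 \<le> qQ aco \<epsilon> Bco kco \<delta> (u - pp)" by (rule lam(2))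
    show "\<And>u. qQ aco \<epsilon> Bco kco \<delta> (u - pp) \<le> Lam * (norm (u - pp))\<^sup>2" by (rule Lam(2))
    show "\<And>u. norm (u - pp) \<le> r0 \<Longrightarrow> inner (gradQ aco \<epsilon> Bco kco \<delta> (u - pp)) (FF u) \<le> - \<gamma> * qQ aco \<epsilon> Bco kco \<delta> (u - pp)"
      by (rule dec0)
    show "\<And>r. 0 < r \<Longrightarrow> r \<le> r0 \<Longrightarrow> \<exists>Ft L. L \<ge> 0 \<and> (\<forall>u v. norm (Ft u - Ft v) \<le> L * norm (u - v)) \<and> (\<forall>u. norm (u - pp) \<le> r \<longrightarrow> Ft u = FF u)"
      by (rule ext_clamp)
  qed (use lam Lam r0 g in auto)
qed

lemma unstable_part:
  assumes D: "\<epsilon>*aco - kco*Bco < 0"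
  shows "\<not> lyapunov_stable FF pp"
proof -
  have D': "(-1) * (\<epsilon>*aco - kco*Bco) > 0" using D by simp
  obtain \<delta> where d: "\<delta> > 0"
    and LamE: "\<exists>Lam>0. \<forall>v. qQ aco \<epsilon> Bco kco ((-1)*\<delta>) v \<le> Lam * (norm v)\<^sup>2"
    and gE: "\<exists>\<gamma>>0. \<exists>r0>0. \<forall>u. norm (u - pp) \<le> r0 \<longrightarrow>
        - (-1) * inner (gradQ aco \<epsilon> Bco kco ((-1)*\<delta>) (u - pp)) (FF u) \<ge> \<gamma> * qQ aco \<epsilon> Bco kco ((-1)*\<delta>) (u - pp)"
    using core[of "-1", OF _ D'] by blast
  define m where "m = (-1) * \<delta>"
  obtain Lam where Lam: "Lam > 0" "\<And>v. qQ aco \<epsilon> Bco kco m v \<le> Lam * (norm v)\<^sup>2" using LamE unfolding m_def by auto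
  obtain \<gamma> r0 where g: "\<gamma> > 0" and r0: "r0 > 0" and inc0: "\<And>u. norm (u - pp) \<le> r0 \<Longrightarrow>
        inner (gradQ aco \<epsilon> Bco kco m (u - pp)) (FF u) \<ge> \<gamma> * qQ aco \<epsilon> Bco kco m (u - pp)"
    using gE unfolding m_def by fastforce
  show ?thesis
  proof (rule unstable_from_chetaev[where W="\<lambda>u. qQ aco \<epsilon> Bco kco m (u - pp)"
        and DW="\<lambda>u h. inner (gradQ aco \<epsilon> Bco kco m (u - pp)) h" and Lam=Lam and \<gamma>=\<gamma>])
    show "\<And>u. ((\<lambda>u. qQ aco \<epsilon> Bco kco m (u - pp)) has_derivative (\<lambda>h. inner (gradQ aco \<epsilon> Bco kco m (u - pp)) h)) (at u)"
      by (rule V_deriv)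
    show "\<And>u. qQ aco \<epsilon> Bco kco m (u - pp) \<le> Lam * (norm (u - pp))\<^sup>2" by (rule Lam(2))
    show "\<And>u. norm (u - pp) \<le> r0 \<Longrightarrow> inner (gradQ aco \<epsilon> Bco kco m (u - pp)) (FF u) \<ge> \<gamma> * qQ aco \<epsilon> Bco kco m (u - pp)"
      by (rule inc0)
    fix d :: real assume dp: "d > 0"
    define x0 where "x0 = pp + (0, 0, d/2)"
    have "dist x0 pp = d/2" using dp by (simp add: x0_def dist_norm norm_Pair)
    moreover have "qQ aco \<epsilon> Bco kco m (x0 - pp) > 0"
      using Bco_pos dp by (simp add: x0_def qQ_def)
    ultimately show "\<exists>x0. dist x0 pp < d \<and> qQ aco \<epsilon> Bco kco m (x0 - pp) > 0" using dp by (intro exI[of _ x0]) auto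
  qed (use Lam r0 g in auto)
qed

lemma final_ctx:
  "(\<epsilon> > governor_eps_c \<alpha> \<beta> \<rho> \<kappa> \<longrightarrow> asymptotically_stable FF pp)
   \<and> (\<epsilon> < governor_eps_c \<alpha> \<beta> \<rho> \<kappa> \<longrightarrow> \<not> lyapunov_stable FF pp)"
proof (intro conjI impI)
  assume "\<epsilon> > governor_eps_c \<alpha> \<beta> \<rho> \<kappa>"
  hence "kco * Bco / aco < \<epsilon>" by (simp add: epsc_eq)
  hence "kco * Bco < \<epsilon> * aco" using aco_pos by (simp add: pos_divide_less_eq)
  thus "asymptotically_stable FF pp" by (intro stable_part) simp
next
  assume "\<epsilon> < governor_eps_c \<alpha> \<beta> \<rho> \<kappa>"
  hence "\<epsilon> < kco * Bco / aco" by (simp add: epsc_eq)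
  hence "\<epsilon> * aco < kco * Bco" using aco_pos by (simp add: pos_less_divide_eq)
  thus "\<not> lyapunov_stable FF pp" by (intro unstable_part) simp
qed

end

theorem theorem2p2:
  fixes \<alpha> \<beta> \<epsilon> \<rho> \<kappa> :: real
  assumes "0 < \<beta>" "\<beta> < 1" "\<alpha> > 0" "\<epsilon> > 0" "\<rho> \<ge> 0" "0 \<le> \<kappa>" "\<kappa> < 1"
  shows "(\<epsilon> > governor_eps_c \<alpha> \<beta> \<rho> \<kappa> \<longrightarrow>
            asymptotically_stable (governor_field \<alpha> \<beta> \<epsilon> \<rho> \<kappa>) (governor_P0 \<beta> \<rho> \<kappa>))
       \<and> (\<epsilon> < governor_eps_c \<alpha> \<beta> \<rho> \<kappa> \<longrightarrow>
            \<not> lyapunov_stable (governor_field \<alpha> \<beta> \<epsilon> \<rho> \<kappa>) (governor_P0 \<beta> \<rho> \<kappa>))"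
  by (rule final_ctx[OF assms])

end
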